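(* Let $d\ge2$, $\alpha\in(0,1)$, $T>0$ and $R>0$. Then there are positive constants $m=m(d,\alpha)$ and $C=C(T,R,d,\alpha)$ such that for any $u\in C^{2+\alpha}_s(\overline{\mathbb H}_T)$ with compact support in $[0,\infty)\times\bar B_R(x^0)$ for some $x^0\in\partial\mathbb H$, and any $\varepsilon\in(0,1)$, we have for all $1\le i,j\le d$: $$\|u\|_{C^\alpha_s(\overline{\mathbb H}_T)}\le\varepsilon\|u\|_{C^{2+\alpha}_s(\overline{\mathbb H}_T)}+C\varepsilon^{-m}\|u\|_{C(\overline{\mathbb H}_T)},$$ $$\|u_{x_i}\|_{C(\overline{\mathbb H}_T)}\le\varepsilon\|u\|_{C^{2+\alpha}_s(\overline{\mathbb H}_T)}+C\varepsilon^{-m}\|u\|_{C(\overline{\mathbb H}_T)},$$ $$\|x_du_{x_i}\|_{C^\alpha_s(\overline{\mathbb H}_T)}\le\varepsilon\|u\|_{C^{2+\alpha}_s(\overline{\mathbb H}_T)}+C\varepsilon^{-m}\|u\|_{C(\overline{\mathbb H}_T)},$$ $$\|x_du_{x_ix_j}\|_{C(\overline{\mathbb H}_T)}\le\varepsilon\|u\|_{C^{2+\alpha}_s(\overline{\mathbb H}_T)}+C\varepsilon^{-m}\|u\|_{C(\overline{\mathbb H}_T)}.$$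
   Context: $\mathbb H=\mathbb R^{d-1}\times(0,\infty)$, $\overline{\mathbb H}=\mathbb R^{d-1}\times[0,\infty)$, $\partial\mathbb H=\{x_d=0\}$, $\mathbb H_T=(0,T)\times\mathbb H$, $\overline{\mathbb H}_T=[0,T]\times\overline{\mathbb H}$. For $x^0\in\overline{\mathbb H}$, $\bar B_R(x^0)=\{x\in\overline{\mathbb H}:|x-x^0|\le R\}$. Cycloidal distance between $P_k=(t_k,x^k)$: $s(P_1,P_2)=\frac{\sum_{i=1}^d|x^1_i-x^2_i|}{\sqrt{x^1_d}+\sqrt{x^2_d}+\sqrt{\sum_{i=1}^{d-1}|x^1_i-x^2_i|}}+\sqrt{|t_1-t_2|}$. For a set $S$: $\|u\|_{C(S)}=\sup_S|u|$; $[u]_{C^\alpha_s(S)}=\sup_{P_1\ne P_2\in S}|u(P_1)-u(P_2)|/s^\alpha(P_1,P_2)$; $\|u\|_{C^\alpha_s(S)}=\|u\|_{C(S)}+[u]_{C^\alpha_s(S)}$; $\|u\|_{C^{2+\alpha}_s(S)}=\|u\|_{C^\alpha_s(S)}+\|u_t\|_{C^\alpha_s(S)}+\max_i\|u_{x_i}\|_{C^\alpha_s(S)}+\max_{i,j}\|x_du_{x_ix_j}\|_{C^\alpha_s(S)}$, and $C^{2+\alpha}_s(S)$ is the space of functions for which this is finite. *)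

theory Defs
  imports "HOL-Analysis.Analysis"
begin

text \<open>Points of R^d are modelled as functions nat => real, using coordinates 1..d
  (all other coordinates are 0).  x_d is the coordinate d.  Space-time points are
  pairs (t, x).\<close>

definition Hbar :: "nat \<Rightarrow> (nat \<Rightarrow> real) set" where
  "Hbar d = {x. (\<forall>i. i \<notin> {1..d} \<longrightarrow> x i = 0) \<and> x d \<ge> 0}"

definition Hint :: "nat \<Rightarrow> (nat \<Rightarrow> real) set" where
  "Hint d = {x. (\<forall>i. i \<notin> {1..d} \<longrightarrow> x i = 0) \<and> x d > 0}"

definition HTbar :: "nat \<Rightarrow> real \<Rightarrow> (real \<times> (nat \<Rightarrow> real)) set" where
  "HTbar d T = {(t, x). 0 \<le> t \<and> t \<le> T \<and> x \<in> Hbar d}"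

definition HTint :: "nat \<Rightarrow> real \<Rightarrow> (real \<times> (nat \<Rightarrow> real)) set" where
  "HTint d T = {(t, x). 0 < t \<and> t < T \<and> x \<in> Hint d}"

definition eucl_dist :: "nat \<Rightarrow> (nat \<Rightarrow> real) \<Rightarrow> (nat \<Rightarrow> real) \<Rightarrow> real" where
  "eucl_dist d x y = sqrt (\<Sum>i=1..d. (x i - y i)^2)"

definition Bbar :: "nat \<Rightarrow> (nat \<Rightarrow> real) \<Rightarrow> real \<Rightarrow> (nat \<Rightarrow> real) set" where
  "Bbar d x0 R = {x \<in> Hbar d. eucl_dist d x x0 \<le> R}"

definition cyc_dist :: "nat \<Rightarrow> real \<times> (nat \<Rightarrow> real) \<Rightarrow> real \<times> (nat \<Rightarrow> real) \<Rightarrow> real" where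
  "cyc_dist d P Q =
     (\<Sum>i=1..d. \<bar>snd P i - snd Q i\<bar>) /
       (sqrt (snd P d) + sqrt (snd Q d) + sqrt (\<Sum>i=1..d-1. \<bar>snd P i - snd Q i\<bar>))
     + sqrt \<bar>fst P - fst Q\<bar>"

definition sup_norm :: "'p set \<Rightarrow> ('p \<Rightarrow> real) \<Rightarrow> real" where
  "sup_norm S f = Sup ((\<lambda>P. \<bar>f P\<bar>) ` S)"

definition holder_quots :: "nat \<Rightarrow> real \<Rightarrow> (real \<times> (nat \<Rightarrow> real)) set
    \<Rightarrow> (real \<times> (nat \<Rightarrow> real) \<Rightarrow> real) \<Rightarrow> real set" where
  "holder_quots d \<alpha> S f =
     {\<bar>f P - f Q\<bar> / (cyc_dist d P Q) powr \<alpha> | P Q. P \<in> S \<and> Q \<in> S \<and> P \<noteq> Q}"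

definition holder_semi :: "nat \<Rightarrow> real \<Rightarrow> (real \<times> (nat \<Rightarrow> real)) set
    \<Rightarrow> (real \<times> (nat \<Rightarrow> real) \<Rightarrow> real) \<Rightarrow> real" where
  "holder_semi d \<alpha> S f = Sup (holder_quots d \<alpha> S f)"

definition holder_norm :: "nat \<Rightarrow> real \<Rightarrow> (real \<times> (nat \<Rightarrow> real)) set
    \<Rightarrow> (real \<times> (nat \<Rightarrow> real) \<Rightarrow> real) \<Rightarrow> real" where
  "holder_norm d \<alpha> S f = sup_norm S f + holder_semi d \<alpha> S f"

definition in_Calpha :: "nat \<Rightarrow> real \<Rightarrow> (real \<times> (nat \<Rightarrow> real)) set
    \<Rightarrow> (real \<times> (nat \<Rightarrow> real) \<Rightarrow> real) \<Rightarrow> bool" where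
  "in_Calpha d \<alpha> S f \<longleftrightarrow> bdd_above ((\<lambda>P. \<bar>f P\<bar>) ` S) \<and> bdd_above (holder_quots d \<alpha> S f)"

text \<open>ut, ux i, uxx i j (functions on the closed layer) are the classical derivatives
  u_t, u_{x_i}, u_{x_i x_j} = (u_{x_i})_{x_j} of u at every interior point;
  on the boundary they are the (necessarily unique, continuous) extensions.\<close>
definition are_derivs :: "nat \<Rightarrow> real \<Rightarrow> (real \<times> (nat \<Rightarrow> real) \<Rightarrow> real)
    \<Rightarrow> (real \<times> (nat \<Rightarrow> real) \<Rightarrow> real) \<Rightarrow> (nat \<Rightarrow> real \<times> (nat \<Rightarrow> real) \<Rightarrow> real)
    \<Rightarrow> (nat \<Rightarrow> nat \<Rightarrow> real \<times> (nat \<Rightarrow> real) \<Rightarrow> real) \<Rightarrow> bool" where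
  "are_derivs d T u ut ux uxx \<longleftrightarrow>
     (\<forall>t x. (t, x) \<in> HTint d T \<longrightarrow>
        ((\<lambda>s. u (s, x)) has_real_derivative ut (t, x)) (at t) \<and>
        (\<forall>i\<in>{1..d}. ((\<lambda>s. u (t, x(i := s))) has_real_derivative ux i (t, x)) (at (x i))) \<and>
        (\<forall>i\<in>{1..d}. \<forall>j\<in>{1..d}.
           ((\<lambda>s. ux i (t, x(j := s))) has_real_derivative uxx i j (t, x)) (at (x j))))"

definition in_C2a :: "nat \<Rightarrow> real \<Rightarrow> real \<Rightarrow> (real \<times> (nat \<Rightarrow> real) \<Rightarrow> real)
    \<Rightarrow> (real \<times> (nat \<Rightarrow> real) \<Rightarrow> real) \<Rightarrow> (nat \<Rightarrow> real \<times> (nat \<Rightarrow> real) \<Rightarrow> real)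
    \<Rightarrow> (nat \<Rightarrow> nat \<Rightarrow> real \<times> (nat \<Rightarrow> real) \<Rightarrow> real) \<Rightarrow> bool" where
  "in_C2a d \<alpha> T u ut ux uxx \<longleftrightarrow>
     are_derivs d T u ut ux uxx \<and>
     in_Calpha d \<alpha> (HTbar d T) u \<and> in_Calpha d \<alpha> (HTbar d T) ut \<and>
     (\<forall>i\<in>{1..d}. in_Calpha d \<alpha> (HTbar d T) (ux i)) \<and>
     (\<forall>i\<in>{1..d}. \<forall>j\<in>{1..d}. in_Calpha d \<alpha> (HTbar d T) (\<lambda>P. snd P d * uxx i j P))"

definition C2a_norm :: "nat \<Rightarrow> real \<Rightarrow> real \<Rightarrow> (real \<times> (nat \<Rightarrow> real) \<Rightarrow> real)
    \<Rightarrow> (real \<times> (nat \<Rightarrow> real) \<Rightarrow> real) \<Rightarrow> (nat \<Rightarrow> real \<times> (nat \<Rightarrow> real) \<Rightarrow> real)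
    \<Rightarrow> (nat \<Rightarrow> nat \<Rightarrow> real \<times> (nat \<Rightarrow> real) \<Rightarrow> real) \<Rightarrow> real" where
  "C2a_norm d \<alpha> T u ut ux uxx =
     holder_norm d \<alpha> (HTbar d T) u + holder_norm d \<alpha> (HTbar d T) ut +
     Max ((\<lambda>i. holder_norm d \<alpha> (HTbar d T) (ux i)) ` {1..d}) +
     Max ((\<lambda>(i, j). holder_norm d \<alpha> (HTbar d T) (\<lambda>P. snd P d * uxx i j P)) ` ({1..d} \<times> {1..d}))"

end

theory Submission
  imports Defs "HOL-Real_Asymp.Real_Asymp"
begin


lemma sum_split_last:
  fixes f :: "nat \<Rightarrow> real"
  assumes "d \<ge> 1" shows "(\<Sum>i=1..d. f i) = (\<Sum>i=1..d-1. f i) + f d"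
proof -
  obtain n where n: "d = Suc n" using assms by (cases d) auto
  show ?thesis unfolding n by (simp add: sum.cl_ivl_Suc)
qed

lemma sqrt_absdiff_le: "0 \<le> a \<Longrightarrow> 0 \<le> b \<Longrightarrow> sqrt \<bar>a - b\<bar> \<le> sqrt a + sqrt b"
proof -
  assume a: "0 \<le> a" "0 \<le> b"
  have "sqrt \<bar>a - b\<bar> \<le> sqrt (a + b)" using a by (intro real_sqrt_le_mono) linarith
  also have "\<dots> \<le> sqrt a + sqrt b" using a by (rule sqrt_add_le_add_sqrt)
  finally show ?thesis .
qed

lemma frac_le_sqrt:
  fixes S D :: real
  assumes "0 \<le> S" "sqrt S \<le> D" shows "S / D \<le> sqrt S"
proof (cases "D = 0")
  case True then show ?thesis using assms by simp
next
  case False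
  then have D: "D > 0" using assms real_sqrt_ge_zero[of S] by linarith
  have "S = sqrt S * sqrt S" using assms by simp
  also have "\<dots> \<le> sqrt S * D" using assms by (intro mult_left_mono) auto
  finally show ?thesis using D by (simp add: divide_le_eq)
qed

definition sig :: "nat \<Rightarrow> (nat \<Rightarrow> real) \<Rightarrow> (nat \<Rightarrow> real) \<Rightarrow> real" where
  "sig d x y = (\<Sum>i=1..d. \<bar>x i - y i\<bar>)"

lemma sig_nonneg: "0 \<le> sig d x y" unfolding sig_def by (intro sum_nonneg) auto

lemma cyc_dist_alt: "cyc_dist d (t1,x) (t2,y) =
   sig d x y / (sqrt (x d) + sqrt (y d) + sqrt (\<Sum>i=1..d-1. \<bar>x i - y i\<bar>)) + sqrt \<bar>t1 - t2\<bar>"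
  unfolding cyc_dist_def sig_def by simp

lemma denom_ge:
  assumes "d \<ge> 1" "x d \<ge> 0" "y d \<ge> 0"
  shows "sqrt (sig d x y) \<le> sqrt (x d) + sqrt (y d) + sqrt (\<Sum>i=1..d-1. \<bar>x i - y i\<bar>)"
proof -
  let ?S' = "(\<Sum>i=1..d-1. \<bar>x i - y i\<bar>)"
  have S: "sig d x y = ?S' + \<bar>x d - y d\<bar>" unfolding sig_def using sum_split_last[OF assms(1)] by simp
  have "sqrt (sig d x y) \<le> sqrt ?S' + sqrt \<bar>x d - y d\<bar>" unfolding S
    by (intro sqrt_add_le_add_sqrt) (auto intro: sum_nonneg)
  also have "\<dots> \<le> sqrt ?S' + (sqrt (x d) + sqrt (y d))" using sqrt_absdiff_le[OF assms(2,3)] by simp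
  finally show ?thesis by simp
qed

lemma cyc_upper:
  assumes "d \<ge> 1" "x d \<ge> 0" "y d \<ge> 0"
  shows "cyc_dist d (t1,x) (t2,y) \<le> sqrt (sig d x y) + sqrt \<bar>t1 - t2\<bar>"
  unfolding cyc_dist_alt using frac_le_sqrt[OF sig_nonneg denom_ge[of d x y, OF assms]] by simp

lemma cyc_nonneg:
  assumes "x d \<ge> 0" "y d \<ge> 0"
  shows "0 \<le> cyc_dist d (t1,x) (t2,y)"
  unfolding cyc_dist_alt using assms sig_nonneg
  by (intro add_nonneg_nonneg divide_nonneg_nonneg) (auto intro!: sum_nonneg)

lemma spatial_le_cyc:
  assumes "x d \<ge> 0" "y d \<ge> 0"
  shows "sig d x y / (sqrt (x d) + sqrt (y d) + sqrt (\<Sum>i=1..d-1. \<bar>x i - y i\<bar>)) \<le> cyc_dist d (t1,x) (t2,y)"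
  unfolding cyc_dist_alt by simp

lemma time_le_cyc:
  assumes "x d \<ge> 0" "y d \<ge> 0"
  shows "sqrt \<bar>t1 - t2\<bar> \<le> cyc_dist d (t1,x) (t2,y)"
  unfolding cyc_dist_alt using assms sig_nonneg
  by (simp add: divide_nonneg_nonneg sum_nonneg)

lemma sig_le_cyc:
  assumes "d \<ge> 1" "x d \<ge> 0" "y d \<ge> 0" "x d \<le> R" "cyc_dist d (t1,x) (t2,y) \<le> 1"
  shows "sig d x y \<le> (4 + 4 * sqrt R) * cyc_dist d (t1,x) (t2,y)"
proof -
  define D where "D = sqrt (x d) + sqrt (y d) + sqrt (\<Sum>i=1..d-1. \<bar>x i - y i\<bar>)"
  define S where "S = sig d x y"
  define s where "s = S / D"
  have S0: "S \<ge> 0" unfolding S_def by (rule sig_nonneg)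
  have R0: "R \<ge> 0" using assms by linarith
  have ss: "s \<le> cyc_dist d (t1,x) (t2,y)" unfolding s_def S_def D_def using spatial_le_cyc[of x d y, OF assms(2,3)] .
  have s0: "s \<ge> 0" unfolding s_def D_def S_def using sig_nonneg assms
    by (intro divide_nonneg_nonneg) (auto intro!: add_nonneg_nonneg sum_nonneg)
  have s1: "s \<le> 1" using ss assms by linarith
  have DS: "sqrt S \<le> D" unfolding S_def D_def using denom_ge[of d x y, OF assms(1-3)] .
  have SD: "S = s * D"
  proof (cases "D = 0")
    case True then have "sqrt S \<le> 0" using DS by simp
    then have "S = 0" using S0 by simp
    then show ?thesis using True by simp
  qed (use S0 in \<open>simp add: s_def\<close>)
  have yd: "y d \<le> x d + S"
  proof -
    have "\<bar>x d - y d\<bar> \<le> S" unfolding S_def sig_def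
      using assms(1) by (intro member_le_sum) auto
    then show ?thesis by linarith
  qed
  have "sqrt (y d) \<le> sqrt (R + S)" using yd assms by (intro real_sqrt_le_mono) linarith
  also have "\<dots> \<le> sqrt R + sqrt S" using R0 S0 by (rule sqrt_add_le_add_sqrt)
  finally have "sqrt (y d) \<le> sqrt R + sqrt S" .
  moreover have "sqrt (x d) \<le> sqrt R" using assms by simp
  moreover have "sqrt (\<Sum>i=1..d-1. \<bar>x i - y i\<bar>) \<le> sqrt S"
  proof -
    have "(\<Sum>i=1..d-1. \<bar>x i - y i\<bar>) \<le> S" unfolding S_def sig_def
      by (intro sum_mono2) auto
    then show ?thesis by simp
  qed
  ultimately have D2: "D \<le> 2 * sqrt R + 2 * sqrt S" unfolding D_def by linarith
  define a where "a = sqrt S"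
  have a0: "a \<ge> 0" unfolding a_def using S0 by simp
  have aS: "a * a = S" unfolding a_def using S0 by simp
  have "a * a \<le> s * (2 * sqrt R + 2 * a)"
    using aS SD D2 s0 unfolding a_def by (metis mult_left_mono)
  then have "a * a \<le> 2 * s * sqrt R + 2 * s * a" by (simp add: algebra_simps)
  moreover have "2 * s * a \<le> a * a / 2 + 2 * s * s"
  proof -
    have "0 \<le> (a - 2 * s) * (a - 2 * s)" by simp
    then show ?thesis by (simp add: algebra_simps)
  qed
  ultimately have "a * a \<le> 4 * s * sqrt R + 4 * s * s" by linarith
  moreover have "s * s \<le> s" using s0 s1 using mult_left_mono[of s 1 s] by simp
  ultimately have "S \<le> 4 * s * sqrt R + 4 * s" using aS by linarith
  also have "\<dots> = (4 + 4 * sqrt R) * s" by (simp add: algebra_simps)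
  also have "\<dots> \<le> (4 + 4 * sqrt R) * cyc_dist d (t1,x) (t2,y)"
    using ss R0 by (intro mult_left_mono) auto
  finally show ?thesis unfolding S_def .
qed




lemma HTbar_mem: "(t,x) \<in> HTbar d T \<longleftrightarrow> 0 \<le> t \<and> t \<le> T \<and> (\<forall>i. i \<notin> {1..d} \<longrightarrow> x i = 0) \<and> x d \<ge> 0"
  unfolding HTbar_def Hbar_def by auto

lemma HTint_mem: "(t,x) \<in> HTint d T \<longleftrightarrow> 0 < t \<and> t < T \<and> (\<forall>i. i \<notin> {1..d} \<longrightarrow> x i = 0) \<and> x d > 0"
  unfolding HTint_def Hint_def by auto

lemma HTint_sub: "P \<in> HTint d T \<Longrightarrow> P \<in> HTbar d T"
  by (cases P) (auto simp: HTint_mem HTbar_mem)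

lemma cyc_pos:
  assumes d: "d \<ge> 1" and P: "P \<in> HTbar d T" and Q: "Q \<in> HTbar d T" and ne: "P \<noteq> Q"
  shows "0 < cyc_dist d P Q"
proof -
  obtain t1 x where Pe: "P = (t1,x)" by (cases P)
  obtain t2 y where Qe: "Q = (t2,y)" by (cases Q)
  have x: "\<forall>i. i \<notin> {1..d} \<longrightarrow> x i = 0" "x d \<ge> 0" using P Pe by (auto simp: HTbar_mem)
  have y: "\<forall>i. i \<notin> {1..d} \<longrightarrow> y i = 0" "y d \<ge> 0" using Q Qe by (auto simp: HTbar_mem)
  define D where "D = sqrt (x d) + sqrt (y d) + sqrt (\<Sum>i=1..d-1. \<bar>x i - y i\<bar>)"
  have sp: "0 \<le> sig d x y / D" unfolding D_def using x y sig_nonneg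
    by (intro divide_nonneg_nonneg) (auto intro!: add_nonneg_nonneg sum_nonneg)
  have eq: "cyc_dist d P Q = sig d x y / D + sqrt \<bar>t1 - t2\<bar>"
    unfolding Pe Qe cyc_dist_alt D_def ..
  show ?thesis
  proof (cases "t1 = t2")
    case False
    then have "0 < sqrt \<bar>t1 - t2\<bar>" by simp
    then show ?thesis unfolding eq using sp by linarith
  next
    case True
    then have "x \<noteq> y" using ne Pe Qe by auto
    then obtain i where i: "x i \<noteq> y i" by auto
    have iin: "i \<in> {1..d}"
    proof (rule ccontr)
      assume "i \<notin> {1..d}"
      then have "x i = 0" "y i = 0" using x(1) y(1) by blast+
      then show False using i by simp
    qed
    have "0 < \<bar>x i - y i\<bar>" using i by simp
    also have "\<bar>x i - y i\<bar> \<le> sig d x y" unfolding sig_def using iin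
      by (intro member_le_sum) auto
    finally have s0: "0 < sig d x y" .
    have "0 < sqrt (sig d x y)" using s0 by simp
    also have "\<dots> \<le> D" unfolding D_def using denom_ge[of d x y] d x y by simp
    finally have "0 < D" .
    then have "0 < sig d x y / D" using s0 by simp
    then show ?thesis unfolding eq using real_sqrt_ge_zero[of "\<bar>t1 - t2\<bar>"] by linarith
  qed
qed

lemma HTbar_ne: "T \<ge> 0 \<Longrightarrow> (0, \<lambda>_. 0) \<in> HTbar d T"
  by (simp add: HTbar_mem)

lemma sup_upper:
  "bdd_above ((\<lambda>P. \<bar>f P\<bar>) ` S) \<Longrightarrow> P \<in> S \<Longrightarrow> \<bar>f P\<bar> \<le> sup_norm S f"
  unfolding sup_norm_def by (rule cSup_upper) auto

lemma sup_least:
  "S \<noteq> {} \<Longrightarrow> (\<And>P. P \<in> S \<Longrightarrow> \<bar>f P\<bar> \<le> B) \<Longrightarrow> sup_norm S f \<le> B"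
  unfolding sup_norm_def by (rule cSup_least) auto

lemma sup_nonneg:
  "bdd_above ((\<lambda>P. \<bar>f P\<bar>) ` S) \<Longrightarrow> S \<noteq> {} \<Longrightarrow> 0 \<le> sup_norm S f"
  using sup_upper[of f S] by (meson abs_ge_zero all_not_in_conv order_trans)

lemma semi_upper:
  assumes "bdd_above (holder_quots d \<alpha> S f)" "P \<in> S" "Q \<in> S" "0 < cyc_dist d P Q"
  shows "\<bar>f P - f Q\<bar> \<le> holder_semi d \<alpha> S f * cyc_dist d P Q powr \<alpha>"
proof -
  have ne: "P \<noteq> Q"
  proof
    assume "P = Q"
    then have "cyc_dist d P Q = 0" by (cases P) (simp add: cyc_dist_def)
    then show False using assms by simp
  qed
  have "\<bar>f P - f Q\<bar> / cyc_dist d P Q powr \<alpha> \<in> holder_quots d \<alpha> S f"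
    unfolding holder_quots_def using assms ne by blast
  then have "\<bar>f P - f Q\<bar> / cyc_dist d P Q powr \<alpha> \<le> holder_semi d \<alpha> S f"
    unfolding holder_semi_def using assms(1) by (rule cSup_upper)
  moreover have "0 < cyc_dist d P Q powr \<alpha>" using assms by simp
  ultimately show ?thesis by (simp add: divide_le_eq)
qed

lemma quots_ne: "T > 0 \<Longrightarrow> holder_quots d \<alpha> (HTbar d T) f \<noteq> {}"
proof -
  assume T: "T > 0"
  have "(0, \<lambda>_. 0) \<in> HTbar d T" "(T, \<lambda>_. 0) \<in> HTbar d T" "((0::real), (\<lambda>_. 0)::nat\<Rightarrow>real) \<noteq> (T, \<lambda>_. 0)"
    using T by (auto simp: HTbar_mem)
  then show ?thesis unfolding holder_quots_def by blast
qed

lemma semi_nonneg: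
  assumes "T > 0" "bdd_above (holder_quots d \<alpha> (HTbar d T) f)"
  shows "0 \<le> holder_semi d \<alpha> (HTbar d T) f"
proof -
  obtain q where q: "q \<in> holder_quots d \<alpha> (HTbar d T) f" using quots_ne[OF assms(1)] by blast
  have "0 \<le> q" using q unfolding holder_quots_def by auto
  also have "q \<le> holder_semi d \<alpha> (HTbar d T) f" unfolding holder_semi_def
    using assms(2) q by (rule cSup_upper[rotated])
  finally show ?thesis .
qed

lemma semi_least:
  assumes "T > 0" "d \<ge> 1"
    and "\<And>P Q. P \<in> HTbar d T \<Longrightarrow> Q \<in> HTbar d T \<Longrightarrow> \<bar>f P - f Q\<bar> \<le> A * cyc_dist d P Q powr \<alpha>"
  shows "holder_semi d \<alpha> (HTbar d T) f \<le> A"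
  unfolding holder_semi_def
proof (rule cSup_least)
  show "holder_quots d \<alpha> (HTbar d T) f \<noteq> {}" using quots_ne[OF assms(1)] .
  fix q assume "q \<in> holder_quots d \<alpha> (HTbar d T) f"
  then obtain P Q where PQ: "q = \<bar>f P - f Q\<bar> / cyc_dist d P Q powr \<alpha>" "P \<in> HTbar d T" "Q \<in> HTbar d T" "P \<noteq> Q"
    unfolding holder_quots_def by blast
  have "0 < cyc_dist d P Q" using cyc_pos[OF assms(2) PQ(2,3,4)] .
  then have "0 < cyc_dist d P Q powr \<alpha>" by simp
  then show "q \<le> A" using assms(3)[OF PQ(2,3)] PQ(1) by (simp add: divide_le_eq)
qed

lemma holder_split:
  fixes D s K G \<delta> \<alpha> :: real
  assumes "0 \<le> s" "0 \<le> K" "0 \<le> G" "D \<le> 2 * G" "s \<le> 1 \<Longrightarrow> D \<le> K * s"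
    "0 < \<delta>" "\<delta> \<le> 1" "0 < \<alpha>" "\<alpha> < 1"
  shows "D \<le> (K * \<delta> powr (1 - \<alpha>) + 2 * G * \<delta> powr (- \<alpha>)) * s powr \<alpha>"
proof (cases "s \<le> \<delta>")
  case True
  have "D \<le> K * s" using assms True by linarith
  also have "s = s powr (1 - \<alpha>) * s powr \<alpha>"
    using assms(1) by (simp add: powr_add[symmetric])
  also have "K * (s powr (1 - \<alpha>) * s powr \<alpha>) \<le> K * (\<delta> powr (1 - \<alpha>) * s powr \<alpha>)"
    using assms True by (intro mult_left_mono mult_right_mono powr_mono2) auto
  also have "\<dots> \<le> (K * \<delta> powr (1 - \<alpha>) + 2 * G * \<delta> powr (- \<alpha>)) * s powr \<alpha>"
    using assms by (simp add: algebra_simps)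
  finally show ?thesis .
next
  case False
  then have s0: "s > 0" using assms by linarith
  have "1 \<le> (s / \<delta>) powr \<alpha>" using False assms by (intro ge_one_powr_ge_zero) auto
  also have "(s / \<delta>) powr \<alpha> = \<delta> powr (- \<alpha>) * s powr \<alpha>"
    using s0 assms by (simp add: powr_divide powr_minus field_simps)
  finally have "2 * G \<le> 2 * G * (\<delta> powr (- \<alpha>) * s powr \<alpha>)"
    using assms by (metis mult.right_neutral mult_left_mono mult_nonneg_nonneg zero_le_numeral)
  then have "D \<le> 2 * G * \<delta> powr (- \<alpha>) * s powr \<alpha>" using assms by simp
  also have "\<dots> \<le> (K * \<delta> powr (1 - \<alpha>) + 2 * G * \<delta> powr (- \<alpha>)) * s powr \<alpha>"
    using assms by (simp add: algebra_simps)
  finally show ?thesis .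
qed

lemma mvt_bound:
  fixes f f' :: "real \<Rightarrow> real"
  assumes "\<And>z. min a b \<le> z \<Longrightarrow> z \<le> max a b \<Longrightarrow> DERIV f z :> f' z"
    and "\<And>z. min a b \<le> z \<Longrightarrow> z \<le> max a b \<Longrightarrow> \<bar>f' z\<bar> \<le> K"
  shows "\<bar>f b - f a\<bar> \<le> K * \<bar>b - a\<bar>"
proof -
  have main: "\<bar>f v - f u\<bar> \<le> K * \<bar>v - u\<bar>" if uv: "u < v" "u = min a b" "v = max a b" for u v
  proof -
    obtain z where z: "u < z" "z < v" "f v - f u = (v - u) * f' z"
      using MVT2[OF uv(1), of f f'] assms uv by auto
    have "\<bar>f v - f u\<bar> = \<bar>v - u\<bar> * \<bar>f' z\<bar>" using z by (simp add: abs_mult)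
    also have "\<dots> \<le> \<bar>v - u\<bar> * K" using assms(2)[of z] z uv by (intro mult_left_mono) auto
    finally show ?thesis by (simp add: mult.commute)
  qed
  show ?thesis
  proof (cases "a < b")
    case True then show ?thesis using main[of a b] by simp
  next
    case False
    show ?thesis
    proof (cases "a = b")
      case True then show ?thesis by simp
    next
      case False
      then have "b < a" using \<open>\<not> a < b\<close> by simp
      then show ?thesis using main[of b a] by (simp add: abs_minus_commute)
    qed
  qed
qed

lemma le_eps_powr:
  fixes X B N \<alpha> :: real
  assumes "0 \<le> N" "0 < \<alpha>" "\<And>\<theta>. 0 < \<theta> \<Longrightarrow> X \<le> B + N * \<theta> powr \<alpha>"
  shows "X \<le> B"
proof (rule ccontr)
  assume "\<not> X \<le> B"
  then have e: "X - B > 0" by simp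
  define \<theta> where "\<theta> = ((X - B) / (2 * (N + 1))) powr (1 / \<alpha>)"
  have t0: "\<theta> > 0" unfolding \<theta>_def using e assms by simp
  have "\<theta> powr \<alpha> = (X - B) / (2 * (N + 1))" unfolding \<theta>_def using e assms
    by (simp add: powr_powr)
  moreover have "N * ((X - B) / (2 * (N + 1))) < X - B"
  proof -
    have "N * ((X - B) / (2 * (N + 1))) = (X - B) * (N / (2 * (N + 1)))" by simp
    also have "N / (2 * (N + 1)) < 1" using assms by (simp add: divide_less_eq)
    then have "(X - B) * (N / (2 * (N + 1))) < (X - B) * 1" using e by (intro mult_strict_left_mono) auto
    finally show ?thesis by simp
  qed
  ultimately have "N * \<theta> powr \<alpha> < X - B" by simp
  then show False using assms(3)[OF t0] by linarith
qed




lemma sig_sym: "sig d x y = sig d y x"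
  unfolding sig_def by (simp add: abs_minus_commute)

lemma cyc_sym: "cyc_dist d P Q = cyc_dist d Q P"
  unfolding cyc_dist_def by (simp add: abs_minus_commute add.commute add.left_commute)

lemma cyc_self: "cyc_dist d P P = 0"
  unfolding cyc_dist_def by simp

lemma sig_upd: "j \<in> {1..d} \<Longrightarrow> sig d x (x(j := v)) = \<bar>x j - v\<bar>"
proof -
  assume j: "j \<in> {1..d}"
  have "sig d x (x(j := v)) = (\<Sum>i\<in>{1..d}. if i = j then \<bar>x j - v\<bar> else 0)"
    unfolding sig_def by (intro sum.cong) auto
  also have "\<dots> = \<bar>x j - v\<bar>" using j by simp
  finally show ?thesis .
qed

lemma Hint_upd: "x \<in> Hint d \<Longrightarrow> j \<in> {1..d} \<Longrightarrow> (j \<noteq> d \<or> v > 0) \<Longrightarrow> x(j := v) \<in> Hint d"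
  unfolding Hint_def by auto

lemma HTint_upd: "(t,x) \<in> HTint d T \<Longrightarrow> j \<in> {1..d} \<Longrightarrow> (j \<noteq> d \<or> v > 0) \<Longrightarrow> (t, x(j := v)) \<in> HTint d T"
  unfolding HTint_def using Hint_upd by auto

lemma HTint_iff: "(t,x) \<in> HTint d T \<longleftrightarrow> 0 < t \<and> t < T \<and> x \<in> Hint d"
  unfolding HTint_def by auto

lemma path_bound:
  fixes \<phi> :: "(nat \<Rightarrow> real) \<Rightarrow> real" and d\<phi> :: "nat \<Rightarrow> (nat \<Rightarrow> real) \<Rightarrow> real"
  assumes d: "d \<ge> 1" and x: "x \<in> Hint d" and y: "y \<in> Hint d"
    and der: "\<And>z j. z \<in> Hint d \<Longrightarrow> j \<in> {1..d} \<Longrightarrow> DERIV (\<lambda>s. \<phi> (z(j := s))) (z j) :> d\<phi> j z"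
    and bd: "\<And>z j. z \<in> Hint d \<Longrightarrow> j \<in> {1..d} \<Longrightarrow> \<bar>d\<phi> j z\<bar> \<le> K"
  shows "\<bar>\<phi> y - \<phi> x\<bar> \<le> K * sig d x y"
proof -
  define zk where "zk k = (\<lambda>i. if 1 \<le> i \<and> i \<le> k then y i else x i)" for k
  have xz: "\<forall>i. i \<notin> {1..d} \<longrightarrow> x i = 0" "x d > 0" using x unfolding Hint_def by auto
  have yz: "\<forall>i. i \<notin> {1..d} \<longrightarrow> y i = 0" "y d > 0" using y unfolding Hint_def by auto
  have zkH: "zk k \<in> Hint d" for k
    unfolding Hint_def zk_def using xz yz by auto
  have z0: "zk 0 = x" unfolding zk_def by auto
  have zd: "zk d = y" unfolding zk_def using xz yz by (auto simp: fun_eq_iff)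
  have K0: "K \<ge> 0" using bd[of x 1] x d by (meson abs_ge_zero atLeastAtMost_iff order_trans le_refl)
  have step: "\<bar>\<phi> (zk (Suc k)) - \<phi> (zk k)\<bar> \<le> K * \<bar>x (Suc k) - y (Suc k)\<bar>" if k: "Suc k \<le> d" for k
  proof -
    let ?j = "Suc k"
    have jin: "?j \<in> {1..d}" using k by simp
    have e1: "zk (Suc k) = (zk k)(?j := y ?j)" unfolding zk_def by (auto simp: fun_eq_iff)
    have e2: "zk k = (zk k)(?j := x ?j)" unfolding zk_def by (auto simp: fun_eq_iff)
    have mem: "(zk k)(?j := w) \<in> Hint d" if "min (x ?j) (y ?j) \<le> w" for w
      using zkH[of k] jin that xz yz by (intro Hint_upd) auto
    have "\<bar>\<phi> ((zk k)(?j := y ?j)) - \<phi> ((zk k)(?j := x ?j))\<bar> \<le> K * \<bar>y ?j - x ?j\<bar>"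
    proof (rule mvt_bound[where f = "\<lambda>s. \<phi> ((zk k)(?j := s))" and f' = "\<lambda>s. d\<phi> ?j ((zk k)(?j := s))"])
      fix w assume w: "min (x ?j) (y ?j) \<le> w" "w \<le> max (x ?j) (y ?j)"
      have "DERIV (\<lambda>s. \<phi> (((zk k)(?j := w))(?j := s))) (((zk k)(?j := w)) ?j) :> d\<phi> ?j ((zk k)(?j := w))"
        using der[OF mem[OF w(1)] jin] .
      then show "DERIV (\<lambda>s. \<phi> ((zk k)(?j := s))) w :> d\<phi> ?j ((zk k)(?j := w))" by simp
      show "\<bar>d\<phi> ?j ((zk k)(?j := w))\<bar> \<le> K" using bd[OF mem[OF w(1)] jin] .
    qed
    then show ?thesis using e1 e2 by (metis abs_minus_commute)
  qed
  have "\<bar>\<phi> (zk k) - \<phi> x\<bar> \<le> K * (\<Sum>i=1..k. \<bar>x i - y i\<bar>)" if "k \<le> d" for k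
    using that
  proof (induction k)
    case 0 then show ?case using z0 by simp
  next
    case (Suc k)
    have "\<bar>\<phi> (zk (Suc k)) - \<phi> x\<bar> \<le> \<bar>\<phi> (zk (Suc k)) - \<phi> (zk k)\<bar> + \<bar>\<phi> (zk k) - \<phi> x\<bar>" by linarith
    also have "\<dots> \<le> K * \<bar>x (Suc k) - y (Suc k)\<bar> + K * (\<Sum>i=1..k. \<bar>x i - y i\<bar>)"
      using step[OF Suc.prems] Suc.IH Suc.prems by (intro add_mono) auto
    also have "\<dots> = K * (\<Sum>i=1..Suc k. \<bar>x i - y i\<bar>)" by (simp add: algebra_simps)
    finally show ?case .
  qed
  from this[of d] show ?thesis using zd unfolding sig_def by simp
qed

definition apx :: "real \<Rightarrow> nat \<Rightarrow> nat \<Rightarrow> real \<times> (nat \<Rightarrow> real) \<Rightarrow> real \<times> (nat \<Rightarrow> real)" where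
  "apx T d n P = ((1 - 1 / (n+1)) * fst P + T / (2 * (n+1)), (snd P)(d := snd P d + 1 / (n+1)))"

lemma apx_in:
  assumes "T > 0" "d \<ge> 1" "P \<in> HTbar d T" shows "apx T d n P \<in> HTint d T"
proof -
  obtain t x where P: "P = (t,x)" by (cases P)
  have t: "0 \<le> t" "t \<le> T" and x: "\<forall>i. i \<notin> {1..d} \<longrightarrow> x i = 0" "x d \<ge> 0"
    using assms P by (auto simp: HTbar_mem)
  have n: "(0::real) < real n + 1" by simp
  have a: "0 \<le> (1 - 1 / (real n + 1))" using n by (simp add: field_simps)
  have "0 < (1 - 1 / (real n+1)) * t + T / (2 * (real n+1))"
    using a t assms n by (intro add_nonneg_pos mult_nonneg_nonneg) auto
  moreover have "(1 - 1 / (real n+1)) * t + T / (2 * (real n+1)) < T"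
  proof -
    have "(1 - 1 / (real n+1)) * t \<le> (1 - 1 / (real n+1)) * T" using a t by (intro mult_left_mono) auto
    moreover have "T / (2 * (real n+1)) < T / (real n + 1)"
    proof -
      define c where "c = T / (real n + 1)"
      have "T / (2 * (real n+1)) = c / 2" unfolding c_def by simp
      moreover have "c > 0" unfolding c_def using assms n by simp
      ultimately show ?thesis unfolding c_def[symmetric] by simp
    qed
    ultimately show ?thesis by (simp add: algebra_simps)
  qed
  moreover have "x d + 1 / (real n+1) > 0" using x n by (smt (verit) divide_pos_pos)
  ultimately show ?thesis unfolding apx_def P using x assms(2)
    by (auto simp: HTint_mem)
qed

lemma apx_dist:
  assumes "T > 0" "d \<ge> 1" "P \<in> HTbar d T" "Q \<in> HTbar d T"
  shows "cyc_dist d (apx T d n P) (apx T d n Q) \<le> cyc_dist d P Q"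
proof -
  obtain t1 x where P: "P = (t1,x)" by (cases P)
  obtain t2 y where Q: "Q = (t2,y)" by (cases Q)
  have x: "x d \<ge> 0" "y d \<ge> 0" using assms P Q by (auto simp: HTbar_mem)
  define e where "e = 1 / (real n + 1)"
  have e0: "0 < e" "e \<le> 1" unfolding e_def by (auto simp: field_simps)
  let ?x' = "x(d := x d + e)" and ?y' = "y(d := y d + e)"
  have sg: "sig d ?x' ?y' = sig d x y" unfolding sig_def by (intro sum.cong) auto
  have s': "(\<Sum>i=1..d-1. \<bar>?x' i - ?y' i\<bar>) = (\<Sum>i=1..d-1. \<bar>x i - y i\<bar>)"
    using assms(2) by (intro sum.cong) auto
  have den: "sqrt (x d) + sqrt (y d) + sqrt (\<Sum>i=1..d-1. \<bar>x i - y i\<bar>) \<le>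
      sqrt (?x' d) + sqrt (?y' d) + sqrt (\<Sum>i=1..d-1. \<bar>?x' i - ?y' i\<bar>)"
    using e0 x s' by (intro add_mono real_sqrt_le_mono) auto
  have "sig d ?x' ?y' / (sqrt (?x' d) + sqrt (?y' d) + sqrt (\<Sum>i=1..d-1. \<bar>?x' i - ?y' i\<bar>))
      \<le> sig d x y / (sqrt (x d) + sqrt (y d) + sqrt (\<Sum>i=1..d-1. \<bar>x i - y i\<bar>))"
  proof (cases "sqrt (x d) + sqrt (y d) + sqrt (\<Sum>i=1..d-1. \<bar>x i - y i\<bar>) = 0")
    case True
    then have "sqrt (sig d x y) \<le> 0" using denom_ge[of d x y] assms(2) x by simp
    then have "sig d x y = 0" using sig_nonneg[of d x y] by simp
    then show ?thesis using sg by simp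
  next
    case False
    then have "0 < sqrt (x d) + sqrt (y d) + sqrt (\<Sum>i=1..d-1. \<bar>x i - y i\<bar>)"
      using x by (smt (verit) real_sqrt_ge_zero sum_nonneg abs_ge_zero)
    then show ?thesis unfolding sg using den sig_nonneg
      by (intro divide_left_mono) auto
  qed
  moreover have "sqrt \<bar>((1 - e) * t1 + T / (2 * (real n+1))) - ((1 - e) * t2 + T / (2 * (real n+1)))\<bar>
      \<le> sqrt \<bar>t1 - t2\<bar>"
  proof -
    have "\<bar>((1 - e) * t1 + T / (2 * (real n+1))) - ((1 - e) * t2 + T / (2 * (real n+1)))\<bar>
        = (1 - e) * \<bar>t1 - t2\<bar>"
    proof -
      have "((1 - e) * t1 + T / (2 * (real n+1))) - ((1 - e) * t2 + T / (2 * (real n+1))) = (1 - e) * (t1 - t2)"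
        by (simp add: algebra_simps)
      then show ?thesis using e0 by (simp add: abs_mult)
    qed
    also have "\<dots> \<le> \<bar>t1 - t2\<bar>" using e0 using mult_right_mono[of "1 - e" 1 "\<bar>t1 - t2\<bar>"] by simp
    finally show ?thesis by simp
  qed
  moreover have "cyc_dist d (apx T d n P) (apx T d n Q) =
     sig d ?x' ?y' / (sqrt (?x' d) + sqrt (?y' d) + sqrt (\<Sum>i=1..d-1. \<bar>?x' i - ?y' i\<bar>)) +
     sqrt \<bar>((1 - e) * t1 + T / (2 * (real n+1))) - ((1 - e) * t2 + T / (2 * (real n+1)))\<bar>"
    unfolding P Q apx_def e_def by (simp only: fst_conv snd_conv cyc_dist_alt)
  moreover have "cyc_dist d P Q = sig d x y / (sqrt (x d) + sqrt (y d) + sqrt (\<Sum>i=1..d-1. \<bar>x i - y i\<bar>))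
     + sqrt \<bar>t1 - t2\<bar>" unfolding P Q by (rule cyc_dist_alt)
  ultimately show ?thesis by linarith
qed

lemma apx_close:
  assumes "T > 0" "d \<ge> 1" "P \<in> HTbar d T"
  shows "cyc_dist d P (apx T d n P) \<le> sqrt (1 / (real n + 1)) + sqrt (T / (real n + 1))"
proof -
  obtain t x where P: "P = (t,x)" by (cases P)
  have t: "0 \<le> t" "t \<le> T" and x: "x d \<ge> 0" using assms P by (auto simp: HTbar_mem)
  define e where "e = 1 / (real n + 1)"
  have e0: "0 < e" "e \<le> 1" unfolding e_def by (auto simp: field_simps)
  have "cyc_dist d P (apx T d n P) \<le> sqrt (sig d x (x(d := x d + e))) +
      sqrt \<bar>t - ((1 - e) * t + T / (2 * (real n+1)))\<bar>"
    unfolding P apx_def e_def[symmetric] using cyc_upper[of d x "x(d := x d + e)"] assms e0 x by simp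
  also have "sig d x (x(d := x d + e)) = e" using sig_upd[of d d x] assms e0 by simp
  also have "\<bar>t - ((1 - e) * t + T / (2 * (real n+1)))\<bar> \<le> T / (real n + 1)"
  proof -
    have "T / (2 * (real n+1)) = e * T / 2" unfolding e_def by simp
    then have "t - ((1 - e) * t + T / (2 * (real n+1))) = e * t - e * T / 2" by (simp add: algebra_simps)
    moreover have "\<bar>e * t - e * T / 2\<bar> \<le> e * T"
    proof -
      have "e * t \<le> e * T" "0 \<le> e * t" using e0 t by (auto intro: mult_left_mono)
      then show ?thesis by (simp add: abs_le_iff)
    qed
    ultimately show ?thesis unfolding e_def by simp
  qed
  then have "sqrt \<bar>t - ((1 - e) * t + T / (2 * (real n+1)))\<bar> \<le> sqrt (T / (real n + 1))" by simp
  finally show ?thesis unfolding e_def by simp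
qed

lemma wn_lim: "T > 0 \<Longrightarrow> (\<lambda>n::nat. sqrt (1 / (real n + 1)) + sqrt (T / (real n + 1))) \<longlonglongrightarrow> 0"
  by real_asymp

lemma wn_lim_powr:
  assumes "T > 0" "\<alpha> > 0"
  shows "(\<lambda>n::nat. (sqrt (1 / (real n + 1)) + sqrt (T / (real n + 1))) powr \<alpha>) \<longlonglongrightarrow> 0"
  by (rule tendsto_zero_powrI[OF wn_lim[OF assms(1)] tendsto_const]) (use assms in auto)

lemma inv_lim: "(\<lambda>n::nat. 1 / (real n + 1)) \<longlonglongrightarrow> 0"
  by real_asymp




locale setting =
  fixes d :: nat and \<alpha> T R :: real and u ut :: "real \<times> (nat \<Rightarrow> real) \<Rightarrow> real"
    and ux :: "nat \<Rightarrow> real \<times> (nat \<Rightarrow> real) \<Rightarrow> real"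
    and uxx :: "nat \<Rightarrow> nat \<Rightarrow> real \<times> (nat \<Rightarrow> real) \<Rightarrow> real" and x0 :: "nat \<Rightarrow> real"
  assumes d2: "d \<ge> 2" and a0: "0 < \<alpha>" and a1: "\<alpha> < 1" and T0: "T > 0" and R0: "R > 0"
    and C2: "in_C2a d \<alpha> T u ut ux uxx" and x0: "x0 \<in> Hbar d" "x0 d = 0"
    and supp: "\<forall>P\<in>HTbar d T. u P \<noteq> 0 \<longrightarrow> snd P \<in> Bbar d x0 R"
begin

abbreviation "H \<equiv> HTbar d T"
abbreviation "I \<equiv> HTint d T"
abbreviation "F i j \<equiv> (\<lambda>P. snd P d * uxx i j P)"
abbreviation "cd \<equiv> cyc_dist d"

definition "N = C2a_norm d \<alpha> T u ut ux uxx"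
definition "M = sup_norm H u"

lemma d1: "d \<ge> 1" using d2 by simp
lemma Hne: "H \<noteq> {}" using HTbar_ne[of T d] T0 by auto

lemma ders: "are_derivs d T u ut ux uxx" using C2 unfolding in_C2a_def by simp

lemma hn_parts:
  assumes "in_Calpha d \<alpha> H f"
  shows "0 \<le> sup_norm H f" "0 \<le> holder_semi d \<alpha> H f"
    "\<And>P. P \<in> H \<Longrightarrow> \<bar>f P\<bar> \<le> sup_norm H f"
    "\<And>P Q. P \<in> H \<Longrightarrow> Q \<in> H \<Longrightarrow> \<bar>f P - f Q\<bar> \<le> holder_semi d \<alpha> H f * cd P Q powr \<alpha>"
proof -
  show "0 \<le> sup_norm H f" using assms Hne unfolding in_Calpha_def by (intro sup_nonneg) auto
  show "0 \<le> holder_semi d \<alpha> H f" using assms T0 unfolding in_Calpha_def by (intro semi_nonneg) auto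
  show "\<And>P. P \<in> H \<Longrightarrow> \<bar>f P\<bar> \<le> sup_norm H f" using assms unfolding in_Calpha_def
    by (intro sup_upper) auto
  fix P Q assume PQ: "P \<in> H" "Q \<in> H"
  show "\<bar>f P - f Q\<bar> \<le> holder_semi d \<alpha> H f * cd P Q powr \<alpha>"
  proof (cases "P = Q")
    case True then show ?thesis by (simp add: cyc_self)
  next
    case False
    then have "0 < cd P Q" using cyc_pos[OF d1 PQ] by simp
    then show ?thesis using assms PQ unfolding in_Calpha_def by (intro semi_upper) auto
  qed
qed

lemma hn_nonneg: "in_Calpha d \<alpha> H f \<Longrightarrow> 0 \<le> holder_norm d \<alpha> H f"
  using hn_parts(1,2) unfolding holder_norm_def by fastforce

lemma Cu: "in_Calpha d \<alpha> H u" and Cut: "in_Calpha d \<alpha> H ut"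
  and Cux: "i \<in> {1..d} \<Longrightarrow> in_Calpha d \<alpha> H (ux i)"
  and CF: "i \<in> {1..d} \<Longrightarrow> j \<in> {1..d} \<Longrightarrow> in_Calpha d \<alpha> H (F i j)"
  using C2 unfolding in_C2a_def by auto

lemma N_parts:
  shows "holder_norm d \<alpha> H u \<le> N" "holder_norm d \<alpha> H ut \<le> N"
    "i \<in> {1..d} \<Longrightarrow> holder_norm d \<alpha> H (ux i) \<le> N"
    "i \<in> {1..d} \<Longrightarrow> j \<in> {1..d} \<Longrightarrow> holder_norm d \<alpha> H (F i j) \<le> N"
proof -
  let ?A = "holder_norm d \<alpha> H u" and ?B = "holder_norm d \<alpha> H ut"
  let ?C = "Max ((\<lambda>i. holder_norm d \<alpha> H (ux i)) ` {1..d})"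
  let ?D = "Max ((\<lambda>(i, j). holder_norm d \<alpha> H (F i j)) ` ({1..d} \<times> {1..d}))"
  have NN: "N = ?A + ?B + ?C + ?D" unfolding N_def C2a_norm_def ..
  have A: "0 \<le> ?A" using hn_nonneg[OF Cu] .
  have B: "0 \<le> ?B" using hn_nonneg[OF Cut] .
  have Cge: "holder_norm d \<alpha> H (ux i) \<le> ?C" if "i \<in> {1..d}" for i
    using that by (intro Max_ge) auto
  have Dge: "holder_norm d \<alpha> H (F i j) \<le> ?D" if "i \<in> {1..d}" "j \<in> {1..d}" for i j
  proof -
    have "holder_norm d \<alpha> H (F i j) \<in> ((\<lambda>(i, j). holder_norm d \<alpha> H (F i j)) ` ({1..d} \<times> {1..d}))"
      using that by force
    then show ?thesis by (intro Max_ge) auto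
  qed
  have 1: "1 \<in> {1..d}" using d1 by simp
  have C: "0 \<le> ?C" using Cge[OF 1] hn_nonneg[OF Cux[OF 1]] by linarith
  have D: "0 \<le> ?D" using Dge[OF 1 1] hn_nonneg[OF CF[OF 1 1]] by linarith
  show "?A \<le> N" "?B \<le> N" using NN A B C D by linarith+
  show "holder_norm d \<alpha> H (ux i) \<le> N" if "i \<in> {1..d}" for i using Cge[OF that] NN A B D by linarith
  show "holder_norm d \<alpha> H (F i j) \<le> N" if "i \<in> {1..d}" "j \<in> {1..d}" for i j
    using Dge[OF that] NN A B C by linarith
qed

lemma bounds_from:
  assumes "in_Calpha d \<alpha> H f" "holder_norm d \<alpha> H f \<le> N"
  shows "\<And>P. P \<in> H \<Longrightarrow> \<bar>f P\<bar> \<le> N"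
    "\<And>P Q. P \<in> H \<Longrightarrow> Q \<in> H \<Longrightarrow> \<bar>f P - f Q\<bar> \<le> N * cd P Q powr \<alpha>"
proof -
  note h = hn_parts[OF assms(1)]
  have s: "sup_norm H f \<le> N" "holder_semi d \<alpha> H f \<le> N"
    using assms(2) h(1,2) unfolding holder_norm_def by linarith+
  show "\<And>P. P \<in> H \<Longrightarrow> \<bar>f P\<bar> \<le> N" using h(3) s by fastforce
  fix P Q assume "P \<in> H" "Q \<in> H"
  then have "\<bar>f P - f Q\<bar> \<le> holder_semi d \<alpha> H f * cd P Q powr \<alpha>" by (rule h(4))
  also have "\<dots> \<le> N * cd P Q powr \<alpha>" using s by (intro mult_right_mono) auto
  finally show "\<bar>f P - f Q\<bar> \<le> N * cd P Q powr \<alpha>" .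
qed

lemmas uN = bounds_from[OF Cu N_parts(1)]
lemmas utN = bounds_from[OF Cut N_parts(2)]
lemma uxN: "i \<in> {1..d} \<Longrightarrow> P \<in> H \<Longrightarrow> \<bar>ux i P\<bar> \<le> N"
  and uxH: "i \<in> {1..d} \<Longrightarrow> P \<in> H \<Longrightarrow> Q \<in> H \<Longrightarrow> \<bar>ux i P - ux i Q\<bar> \<le> N * cd P Q powr \<alpha>"
  using bounds_from[OF Cux N_parts(3)] by auto
lemma FN: "i \<in> {1..d} \<Longrightarrow> j \<in> {1..d} \<Longrightarrow> P \<in> H \<Longrightarrow> \<bar>F i j P\<bar> \<le> N"
  and FH: "i \<in> {1..d} \<Longrightarrow> j \<in> {1..d} \<Longrightarrow> P \<in> H \<Longrightarrow> Q \<in> H \<Longrightarrow> \<bar>F i j P - F i j Q\<bar> \<le> N * cd P Q powr \<alpha>"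
  using bounds_from[OF CF N_parts(4)] by auto

lemma uM: "P \<in> H \<Longrightarrow> \<bar>u P\<bar> \<le> M"
  unfolding M_def using hn_parts(3)[OF Cu] .
lemma M0: "0 \<le> M" unfolding M_def using hn_parts(1)[OF Cu] .
lemma N0: "0 \<le> N" using uN(1)[of "(0, \<lambda>_. 0)"] HTbar_ne[of T d] T0 by fastforce

lemma Z1: assumes "(t,x) \<in> H" "x d > R" shows "u (t,x) = 0"
proof (rule ccontr)
  assume "u (t,x) \<noteq> 0"
  then have "x \<in> Bbar d x0 R" using supp assms(1) by fastforce
  then have e: "eucl_dist d x x0 \<le> R" unfolding Bbar_def by simp
  have "(x d - x0 d)^2 \<le> (\<Sum>i=1..d. (x i - x0 i)^2)"
    using d1 by (intro member_le_sum) auto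
  then have "sqrt ((x d - x0 d)^2) \<le> eucl_dist d x x0" unfolding eucl_dist_def
    by (rule real_sqrt_le_mono)
  then have "\<bar>x d\<bar> \<le> R" using e x0(2) by simp
  then show False using assms by simp
qed

lemma der_t: "(t,x) \<in> I \<Longrightarrow> DERIV (\<lambda>s. u (s, x)) t :> ut (t,x)"
  using ders unfolding are_derivs_def by blast
lemma der_x: "(t,x) \<in> I \<Longrightarrow> i \<in> {1..d} \<Longrightarrow> DERIV (\<lambda>s. u (t, x(i := s))) (x i) :> ux i (t,x)"
  using ders unfolding are_derivs_def by blast
lemma der_xx: "(t,x) \<in> I \<Longrightarrow> i \<in> {1..d} \<Longrightarrow> j \<in> {1..d} \<Longrightarrow>
    DERIV (\<lambda>s. ux i (t, x(j := s))) (x j) :> uxx i j (t,x)"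
  using ders unfolding are_derivs_def by blast

lemma Z2: assumes P: "(t,x) \<in> I" "x d > R" and i: "i \<in> {1..d}" shows "ux i (t,x) = 0"
proof -
  define \<delta> where "\<delta> = (if i = d then x d - R else 1)"
  have "\<delta> > 0" unfolding \<delta>_def using P by auto
  have D: "DERIV (\<lambda>s. u (t, x(i := s))) (x i) :> ux i (t,x)" using der_x[OF P(1) i] .
  show ?thesis
  proof (rule DERIV_local_const[OF D \<open>\<delta> > 0\<close>], intro allI impI)
    fix y assume y: "\<bar>x i - y\<bar> < \<delta>"
    have xd: "(x(i := y)) d > R" using y P unfolding \<delta>_def by (cases "i = d") auto
    have yv: "i \<noteq> d \<or> y > 0" using xd R0 by auto
    have "(t, x(i := y)) \<in> H" using HTint_sub[OF HTint_upd[OF P(1) i yv]] .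
    then have "u (t, x(i := y)) = 0" using Z1 xd by blast
    moreover have "u (t, x(i := x i)) = 0" using Z1[OF HTint_sub[OF P(1)] P(2)] by simp
    ultimately show "u (t, x(i := x i)) = u (t, x(i := y))" by simp
  qed
qed

lemma Z3: assumes P: "(t,x) \<in> I" "x d > R" and i: "i \<in> {1..d}" and j: "j \<in> {1..d}"
  shows "uxx i j (t,x) = 0"
proof -
  define \<delta> where "\<delta> = (if j = d then x d - R else 1)"
  have "\<delta> > 0" unfolding \<delta>_def using P by auto
  show ?thesis
  proof (rule DERIV_local_const[OF der_xx[OF P(1) i j] \<open>\<delta> > 0\<close>], intro allI impI)
    fix y assume y: "\<bar>x j - y\<bar> < \<delta>"
    have xd: "(x(j := y)) d > R" using y P unfolding \<delta>_def by (cases "j = d") auto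
    have yv: "j \<noteq> d \<or> y > 0" using xd R0 by auto
    have "ux i (t, x(j := y)) = 0" using Z2[OF HTint_upd[OF P(1) j yv] xd i] .
    moreover have "ux i (t, x(j := x j)) = 0" using Z2[OF P i] by simp
    ultimately show "ux i (t, x(j := x j)) = ux i (t, x(j := y))" by simp
  qed
qed

end



context setting begin

lemma Hint_I: "0 < t \<Longrightarrow> t < T \<Longrightarrow> z \<in> Hint d \<Longrightarrow> (t,z) \<in> I"
  by (simp add: HTint_iff)

lemma I_Hint: "(t,z) \<in> I \<Longrightarrow> z \<in> Hint d" "(t,z) \<in> I \<Longrightarrow> 0 < t" "(t,z) \<in> I \<Longrightarrow> t < T"
  by (simp_all add: HTint_iff)

lemma E_time:
  assumes "(t1,x) \<in> I" "(t2,x) \<in> I"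
  shows "\<bar>u (t1,x) - u (t2,x)\<bar> \<le> N * \<bar>t1 - t2\<bar>"
proof -
  have "\<bar>u (t2,x) - u (t1,x)\<bar> \<le> N * \<bar>t2 - t1\<bar>"
  proof (rule mvt_bound[where f = "\<lambda>s. u (s,x)" and f' = "\<lambda>s. ut (s,x)"])
    fix z assume z: "min t1 t2 \<le> z" "z \<le> max t1 t2"
    have "(z,x) \<in> I" using assms z by (intro Hint_I) (auto simp: HTint_iff)
    then show "DERIV (\<lambda>s. u (s,x)) z :> ut (z,x)" "\<bar>ut (z,x)\<bar> \<le> N"
      using der_t utN(1)[OF HTint_sub] by auto
  qed
  then show ?thesis by (simp add: abs_minus_commute)
qed

lemma E_space:
  assumes "(t,x) \<in> I" "(t,y) \<in> I"
  shows "\<bar>u (t,y) - u (t,x)\<bar> \<le> N * sig d x y"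
proof (rule path_bound[where \<phi> = "\<lambda>z. u (t,z)" and d\<phi> = "\<lambda>j z. ux j (t,z)", OF d1])
  show "x \<in> Hint d" "y \<in> Hint d" using assms by (auto simp: HTint_iff)
  fix z j assume z: "z \<in> Hint d" and j: "j \<in> {1..d}"
  have zI: "(t,z) \<in> I" using z assms by (intro Hint_I) (auto simp: HTint_iff)
  show "DERIV (\<lambda>s. u (t, z(j := s))) (z j) :> ux j (t, z)" using der_x[OF zI j] .
  show "\<bar>ux j (t,z)\<bar> \<le> N" using uxN[OF j HTint_sub[OF zI]] .
qed

lemma cd_upd:
  assumes "(t,x) \<in> H" "(t, x(j := z)) \<in> H" "j \<in> {1..d}" "\<bar>x j - z\<bar> \<le> h"
  shows "cd (t,x) (t, x(j := z)) powr \<alpha> \<le> h powr (\<alpha>/2)"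
proof -
  have xd: "x d \<ge> 0" "(x(j:=z)) d \<ge> 0" using assms by (auto simp: HTbar_mem)
  have "cd (t,x) (t, x(j := z)) \<le> sqrt (sig d x (x(j := z))) + sqrt \<bar>t - t\<bar>"
    by (rule cyc_upper[of d x "x(j := z)", OF d1 xd])
  also have "\<dots> = sqrt \<bar>x j - z\<bar>" using sig_upd[OF assms(3)] by simp
  also have "\<dots> \<le> sqrt h" using assms(4) by simp
  finally have c: "cd (t,x) (t, x(j := z)) \<le> sqrt h" .
  have h0: "h \<ge> 0" using assms(4) by linarith
  have "cd (t,x) (t, x(j := z)) powr \<alpha> \<le> sqrt h powr \<alpha>"
    using c a0 cyc_nonneg[of x d "x(j := z)", OF xd] by (intro powr_mono2) auto
  also have "sqrt h powr \<alpha> = h powr (\<alpha>/2)" using h0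
    by (simp add: powr_half_sqrt[symmetric] powr_powr)
  finally show ?thesis .
qed

lemma upd_I: "(t,x) \<in> I \<Longrightarrow> j \<in> {1..d} \<Longrightarrow> x j \<le> w \<Longrightarrow> (t, x(j := w)) \<in> I"
proof -
  assume a: "(t,x) \<in> I" "j \<in> {1..d}" "x j \<le> w"
  have "j \<noteq> d \<or> w > 0" using a by (auto simp: HTint_iff Hint_def)
  then show ?thesis using HTint_upd[OF a(1,2)] by blast
qed

lemma der_x_at:
  "(t,x) \<in> I \<Longrightarrow> i \<in> {1..d} \<Longrightarrow> x i \<le> w \<Longrightarrow>
     DERIV (\<lambda>s. u (t, x(i := s))) w :> ux i (t, x(i := w))"
  using der_x[OF upd_I, of t x i w i] by simp

lemma der_xx_at:
  "(t,x) \<in> I \<Longrightarrow> i \<in> {1..d} \<Longrightarrow> j \<in> {1..d} \<Longrightarrow> x j \<le> w \<Longrightarrow>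
     DERIV (\<lambda>s. ux i (t, x(j := s))) w :> uxx i j (t, x(j := w))"
  using der_xx[OF upd_I, of t x j w i j] by simp

lemma EU:
  assumes P: "(t,x) \<in> I" and i: "i \<in> {1..d}" and h: "h > 0"
  shows "\<bar>ux i (t,x)\<bar> \<le> 2 * M / h + N * h powr (\<alpha>/2)"
proof -
  have "x i < x i + h" using h by simp
  from MVT2[OF this, of "\<lambda>s. u (t, x(i := s))" "\<lambda>s. ux i (t, x(i := s))"]
  obtain z where z: "x i < z" "z < x i + h"
    "u (t, x(i := x i + h)) - u (t, x(i := x i)) = (x i + h - x i) * ux i (t, x(i := z))"
    using der_x_at[OF P i] by auto
  have zI: "(t, x(i := z)) \<in> I" using upd_I[OF P i] z by simp
  have eI: "(t, x(i := x i + h)) \<in> I" using upd_I[OF P i] h by simp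
  have "h * \<bar>ux i (t, x(i := z))\<bar> = \<bar>u (t, x(i := x i + h)) - u (t, x)\<bar>"
    using z(3) h by (simp add: abs_mult)
  also have "\<dots> \<le> 2 * M" using uM[OF HTint_sub[OF eI]] uM[OF HTint_sub[OF P]] by linarith
  finally have b1: "\<bar>ux i (t, x(i := z))\<bar> \<le> 2 * M / h" using h by (simp add: field_simps)
  have "\<bar>ux i (t,x) - ux i (t, x(i := z))\<bar> \<le> N * cd (t,x) (t, x(i := z)) powr \<alpha>"
    by (rule uxH[OF i HTint_sub[OF P] HTint_sub[OF zI]])
  also have "\<dots> \<le> N * h powr (\<alpha>/2)"
    using cd_upd[OF HTint_sub[OF P] HTint_sub[OF zI] i] z N0 by (intro mult_left_mono) auto
  finally show ?thesis using b1 by linarith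
qed

lemma EF:
  assumes P: "(t,x) \<in> I" and i: "i \<in> {1..d}" and j: "j \<in> {1..d}" and h: "0 < h" "h \<le> 1"
    and G: "\<And>Q. Q \<in> H \<Longrightarrow> \<bar>ux i Q\<bar> \<le> G"
  shows "\<bar>F i j (t,x)\<bar> \<le> 2 * (R + 1) * G / h + N * h powr (\<alpha>/2)"
proof -
  have G0: "0 \<le> G" using G[OF HTint_sub[OF P]] by linarith
  have rhs0: "0 \<le> 2 * (R + 1) * G / h + N * h powr (\<alpha>/2)"
    using G0 R0 h N0 by (intro add_nonneg_nonneg) auto
  show ?thesis
  proof (cases "x d > R")
    case True
    then show ?thesis using Z3[OF P True i j] rhs0 by simp
  next
    case False
    have "x j < x j + h" using h by simp
    from MVT2[OF this, of "\<lambda>s. ux i (t, x(j := s))" "\<lambda>s. uxx i j (t, x(j := s))"]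
    obtain z where z: "x j < z" "z < x j + h"
      "ux i (t, x(j := x j + h)) - ux i (t, x(j := x j)) = (x j + h - x j) * uxx i j (t, x(j := z))"
      using der_xx_at[OF P i j] by auto
    have zI: "(t, x(j := z)) \<in> I" using upd_I[OF P j] z by simp
    have eI: "(t, x(j := x j + h)) \<in> I" using upd_I[OF P j] h by simp
    have "h * \<bar>uxx i j (t, x(j := z))\<bar> = \<bar>ux i (t, x(j := x j + h)) - ux i (t, x)\<bar>"
      using z(3) h by (simp add: abs_mult)
    also have "\<dots> \<le> 2 * G" using G[OF HTint_sub[OF eI]] G[OF HTint_sub[OF P]] by linarith
    finally have b1: "\<bar>uxx i j (t, x(j := z))\<bar> \<le> 2 * G / h" using h by (simp add: field_simps)
    have zd: "0 \<le> (x(j := z)) d" "(x(j := z)) d \<le> R + 1"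
      using zI False z h by (auto simp: HTint_iff Hint_def)
    have "\<bar>F i j (t, x(j := z))\<bar> = (x(j := z)) d * \<bar>uxx i j (t, x(j := z))\<bar>"
      using zd by (simp add: abs_mult)
    also have "\<dots> \<le> (R + 1) * (2 * G / h)"
      using zd b1 by (intro mult_mono) auto
    finally have b2: "\<bar>F i j (t, x(j := z))\<bar> \<le> 2 * (R + 1) * G / h"
      by (simp only: snd_conv) (simp add: field_simps)
    have "\<bar>F i j (t,x) - F i j (t, x(j := z))\<bar> \<le> N * cd (t,x) (t, x(j := z)) powr \<alpha>"
      by (rule FH[OF i j HTint_sub[OF P] HTint_sub[OF zI]])
    also have "\<dots> \<le> N * h powr (\<alpha>/2)"
      using cd_upd[OF HTint_sub[OF P] HTint_sub[OF zI] j] z N0 by (intro mult_left_mono) auto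
    finally show ?thesis using b2 by linarith
  qed
qed

lemma TP1:
  assumes P: "(\<tau>,x) \<in> I" and i: "i \<in> {1..d}" and h: "h > 0"
  shows "\<bar>ux i (\<tau>,x) - (u (\<tau>, x(i := x i + h)) - u (\<tau>,x)) / h\<bar> \<le> h * N / x d"
proof -
  have xd: "x d > 0" using P by (simp add: HTint_iff Hint_def)
  have "x i < x i + h" using h by simp
  from MVT2[OF this, of "\<lambda>s. u (\<tau>, x(i := s))" "\<lambda>s. ux i (\<tau>, x(i := s))"]
  obtain z where z: "x i < z" "z < x i + h"
    "u (\<tau>, x(i := x i + h)) - u (\<tau>, x(i := x i)) = (x i + h - x i) * ux i (\<tau>, x(i := z))"
    using der_x_at[OF P i] by auto
  have D: "(u (\<tau>, x(i := x i + h)) - u (\<tau>,x)) / h = ux i (\<tau>, x(i := z))" using z(3) h by simp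
  have "\<bar>ux i (\<tau>, x(i := z)) - ux i (\<tau>, x(i := x i))\<bar> \<le> (N / x d) * \<bar>z - x i\<bar>"
  proof (rule mvt_bound[where f = "\<lambda>s. ux i (\<tau>, x(i := s))" and f' = "\<lambda>s. uxx i i (\<tau>, x(i := s))"])
    fix w assume w: "min (x i) z \<le> w" "w \<le> max (x i) z"
    then have w': "x i \<le> w" using z by simp
    show "DERIV (\<lambda>s. ux i (\<tau>, x(i := s))) w :> uxx i i (\<tau>, x(i := w))" using der_xx_at[OF P i i w'] .
    have wI: "(\<tau>, x(i := w)) \<in> I" using upd_I[OF P i w'] .
    have wd: "x d \<le> (x(i := w)) d" using w' by simp
    have F: "\<bar>(x(i := w)) d * uxx i i (\<tau>, x(i := w))\<bar> \<le> N" using FN[OF i i HTint_sub[OF wI]] by simp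
    have "x d * \<bar>uxx i i (\<tau>, x(i := w))\<bar> \<le> (x(i := w)) d * \<bar>uxx i i (\<tau>, x(i := w))\<bar>"
      using wd by (intro mult_right_mono) auto
    also have "\<dots> \<le> N" using F xd wd by (simp add: abs_mult)
    finally show "\<bar>uxx i i (\<tau>, x(i := w))\<bar> \<le> N / x d" using xd by (simp add: field_simps mult.commute)
  qed
  also have "\<dots> \<le> (N / x d) * h" using z N0 xd by (intro mult_left_mono) auto
  finally show ?thesis unfolding D by (simp add: abs_minus_commute mult.commute)
qed

lemma TP:
  assumes P1: "(t1,x) \<in> I" and P2: "(t2,x) \<in> I" and i: "i \<in> {1..d}" and h: "h > 0"
  shows "\<bar>ux i (t1,x) - ux i (t2,x)\<bar> \<le> 2 * (h * N / x d) + 2 * N * \<bar>t1 - t2\<bar> / h"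
proof -
  let ?e = "x(i := x i + h)"
  have e1: "(t1, ?e) \<in> I" using upd_I[OF P1 i] h by simp
  have e2: "(t2, ?e) \<in> I" using upd_I[OF P2 i] h by simp
  have "\<bar>(u (t1, ?e) - u (t1,x)) / h - (u (t2, ?e) - u (t2,x)) / h\<bar>
      = \<bar>(u (t1, ?e) - u (t2, ?e)) - (u (t1,x) - u (t2,x))\<bar> / h"
  proof -
    have "(u (t1, ?e) - u (t1,x)) / h - (u (t2, ?e) - u (t2,x)) / h
       = ((u (t1, ?e) - u (t2, ?e)) - (u (t1,x) - u (t2,x))) / h"
      using h by (simp add: field_simps)
    then show ?thesis using h by simp
  qed
  also have "\<dots> \<le> (N * \<bar>t1 - t2\<bar> + N * \<bar>t1 - t2\<bar>) / h"
  proof (rule divide_right_mono)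
    show "\<bar>(u (t1, ?e) - u (t2, ?e)) - (u (t1,x) - u (t2,x))\<bar> \<le> N * \<bar>t1 - t2\<bar> + N * \<bar>t1 - t2\<bar>"
      using E_time[OF e1 e2] E_time[OF P1 P2] by linarith
  qed (use h in auto)
  finally have "\<bar>(u (t1, ?e) - u (t1,x)) / h - (u (t2, ?e) - u (t2,x)) / h\<bar> \<le> 2 * N * \<bar>t1 - t2\<bar> / h"
    by (simp add: mult.commute mult.left_commute)
  then show ?thesis using TP1[OF P1 i h] TP1[OF P2 i h] by linarith
qed

lemma GP:
  assumes "(t,x) \<in> I" "(t,y) \<in> I" and i: "i \<in> {1..d}"
  shows "\<bar>y d * ux i (t,y) - x d * ux i (t,x)\<bar> \<le> 2 * N * sig d x y"
proof (rule path_bound[where \<phi> = "\<lambda>z. z d * ux i (t,z)"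
      and d\<phi> = "\<lambda>j z. if j = d then ux i (t,z) + z d * uxx i d (t,z) else z d * uxx i j (t,z)", OF d1])
  show "x \<in> Hint d" "y \<in> Hint d" using assms by (auto simp: HTint_iff)
  fix z j assume z: "z \<in> Hint d" and j: "j \<in> {1..d}"
  have zI: "(t,z) \<in> I" using z assms by (intro Hint_I) (auto simp: HTint_iff)
  show "DERIV (\<lambda>s. (z(j := s)) d * ux i (t, z(j := s))) (z j) :>
      (if j = d then ux i (t,z) + z d * uxx i d (t,z) else z d * uxx i j (t,z))"
  proof (cases "j = d")
    case True
    have "DERIV (\<lambda>s. s * ux i (t, z(d := s))) (z d) :> 1 * ux i (t, z(d := z d)) + uxx i d (t,z) * z d"
      using DERIV_mult[OF DERIV_ident der_xx[OF zI i, of d]] d1 by simp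
    then show ?thesis using True by (simp add: mult.commute)
  next
    case False
    have "DERIV (\<lambda>s. z d * ux i (t, z(j := s))) (z j) :> z d * uxx i j (t,z)"
      using DERIV_cmult[OF der_xx[OF zI i j]] .
    then show ?thesis using False by simp
  qed
  have b1: "\<bar>ux i (t,z)\<bar> \<le> N" using uxN[OF i HTint_sub[OF zI]] .
  have b2: "\<bar>z d * uxx i j (t,z)\<bar> \<le> N" using FN[OF i j HTint_sub[OF zI]] by simp
  have b3: "\<bar>z d * uxx i d (t,z)\<bar> \<le> N" using FN[OF i _ HTint_sub[OF zI], of d] d1 by simp
  show "\<bar>if j = d then ux i (t,z) + z d * uxx i d (t,z) else z d * uxx i j (t,z)\<bar> \<le> 2 * N"
    using b1 b2 b3 N0 by auto
qed

end



context setting begin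

definition "KR = 4 + 4 * sqrt R"
lemma KR0: "KR \<ge> 0" unfolding KR_def using R0 by simp

lemma sig_K:
  assumes "(t1,x) \<in> H" "(t2,y) \<in> H" "x d \<le> R \<or> y d \<le> R" "cd (t1,x) (t2,y) \<le> 1"
  shows "sig d x y \<le> KR * cd (t1,x) (t2,y)"
proof -
  have xd: "x d \<ge> 0" "y d \<ge> 0" using assms by (auto simp: HTbar_mem)
  show ?thesis
  proof (cases "x d \<le> R")
    case True
    then show ?thesis unfolding KR_def by (rule sig_le_cyc[OF d1 xd _ assms(4)])
  next
    case False
    then have y: "y d \<le> R" using assms by simp
    have "cd (t2,y) (t1,x) \<le> 1" using assms(4) cyc_sym by metis
    from sig_le_cyc[OF d1 xd(2,1) y this] show ?thesis
      unfolding KR_def using sig_sym cyc_sym by metis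
  qed
qed

lemma dt_le:
  assumes "(t1,x) \<in> H" "(t2,y) \<in> H" "cd (t1,x) (t2,y) \<le> 1"
  shows "\<bar>t1 - t2\<bar> \<le> cd (t1,x) (t2,y)" "sqrt \<bar>t1 - t2\<bar> \<le> cd (t1,x) (t2,y)"
proof -
  have xd: "x d \<ge> 0" "y d \<ge> 0" using assms by (auto simp: HTbar_mem)
  have s: "sqrt \<bar>t1 - t2\<bar> \<le> cd (t1,x) (t2,y)" by (rule time_le_cyc[of x d y, OF xd])
  then show "sqrt \<bar>t1 - t2\<bar> \<le> cd (t1,x) (t2,y)" .
  have s1: "sqrt \<bar>t1 - t2\<bar> \<le> 1" using s assms by linarith
  have "\<bar>t1 - t2\<bar> = sqrt \<bar>t1 - t2\<bar> * sqrt \<bar>t1 - t2\<bar>" by simp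
  also have "\<dots> \<le> sqrt \<bar>t1 - t2\<bar> * 1" using s1 by (intro mult_left_mono) auto
  finally show "\<bar>t1 - t2\<bar> \<le> cd (t1,x) (t2,y)" using s by simp
qed

lemma ULip:
  assumes P: "(t1,x) \<in> I" and Q: "(t2,y) \<in> I" and c: "cd (t1,x) (t2,y) \<le> 1"
  shows "\<bar>u (t1,x) - u (t2,y)\<bar> \<le> (KR + 1) * N * cd (t1,x) (t2,y)"
proof -
  have PH: "(t1,x) \<in> H" and QH: "(t2,y) \<in> H" using P Q HTint_sub by auto
  have c0: "0 \<le> cd (t1,x) (t2,y)" using PH QH by (intro cyc_nonneg) (auto simp: HTbar_mem)
  show ?thesis
  proof (cases "x d > R \<and> y d > R")
    case True
    then show ?thesis using Z1[OF PH] Z1[OF QH] KR0 N0 c0 by simp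
  next
    case False
    then have sg: "sig d x y \<le> KR * cd (t1,x) (t2,y)" using sig_K[OF PH QH _ c] by auto
    have mid: "(t2,x) \<in> I" using P Q by (simp add: HTint_iff)
    have "\<bar>u (t1,x) - u (t2,y)\<bar> \<le> \<bar>u (t1,x) - u (t2,x)\<bar> + \<bar>u (t2,y) - u (t2,x)\<bar>" by linarith
    also have "\<dots> \<le> N * \<bar>t1 - t2\<bar> + N * sig d x y"
      using E_time[OF P mid] E_space[OF mid Q] by linarith
    also have "\<dots> \<le> N * cd (t1,x) (t2,y) + N * (KR * cd (t1,x) (t2,y))"
      using dt_le(1)[OF PH QH c] sg N0 by (intro add_mono mult_left_mono) auto
    finally show ?thesis by (simp add: algebra_simps)
  qed
qed

lemma GT:
  assumes P1: "(t1,x) \<in> I" and P2: "(t2,x) \<in> I" and i: "i \<in> {1..d}"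
  shows "\<bar>x d * ux i (t1,x) - x d * ux i (t2,x)\<bar> \<le> 4 * N * sqrt R * sqrt \<bar>t1 - t2\<bar>"
proof -
  have xd: "x d > 0" using P1 by (simp add: HTint_iff Hint_def)
  have rhs0: "0 \<le> 4 * N * sqrt R * sqrt \<bar>t1 - t2\<bar>" using N0 R0 by simp
  show ?thesis
  proof (cases "x d > R \<or> t1 = t2")
    case True
    then show ?thesis using Z2[OF P1 _ i] Z2[OF P2 _ i] rhs0 by auto
  next
    case False
    then have xR: "x d \<le> R" and tne: "t1 \<noteq> t2" by auto
    define h where "h = sqrt (x d * \<bar>t1 - t2\<bar>)"
    have h0: "h > 0" unfolding h_def using xd tne by simp
    have hh: "h * h = x d * \<bar>t1 - t2\<bar>" unfolding h_def using xd by simp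
    have "\<bar>x d * ux i (t1,x) - x d * ux i (t2,x)\<bar> = x d * \<bar>ux i (t1,x) - ux i (t2,x)\<bar>"
      using xd by (simp add: abs_mult flip: right_diff_distrib)
    also have "\<dots> \<le> x d * (2 * (h * N / x d) + 2 * N * \<bar>t1 - t2\<bar> / h)"
      using TP[OF P1 P2 i h0] xd by (intro mult_left_mono) auto
    also have "\<dots> = 2 * h * N + 2 * N * (x d * \<bar>t1 - t2\<bar>) / h"
      using xd h0 by (simp add: field_simps)
    also have "\<dots> = 4 * N * h" using hh h0 by (simp add: field_simps flip: hh)
    also have "h = sqrt (x d) * sqrt \<bar>t1 - t2\<bar>" unfolding h_def by (simp add: real_sqrt_mult)
    also have "4 * N * (sqrt (x d) * sqrt \<bar>t1 - t2\<bar>) \<le> 4 * N * (sqrt R * sqrt \<bar>t1 - t2\<bar>)"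
      using xR N0 by (intro mult_left_mono mult_right_mono) auto
    finally show ?thesis by (simp add: mult.assoc)
  qed
qed

definition "LG = 4 * sqrt R + 2 * KR"
lemma LG0: "LG \<ge> 0" unfolding LG_def using KR0 R0 by simp

lemma GLip:
  assumes P: "(t1,x) \<in> I" and Q: "(t2,y) \<in> I" and c: "cd (t1,x) (t2,y) \<le> 1" and i: "i \<in> {1..d}"
  shows "\<bar>x d * ux i (t1,x) - y d * ux i (t2,y)\<bar> \<le> LG * N * cd (t1,x) (t2,y)"
proof -
  have PH: "(t1,x) \<in> H" and QH: "(t2,y) \<in> H" using P Q HTint_sub by auto
  have c0: "0 \<le> cd (t1,x) (t2,y)" using PH QH by (intro cyc_nonneg) (auto simp: HTbar_mem)
  have mid: "(t2,x) \<in> I" using P Q by (simp add: HTint_iff)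
  have sp: "\<bar>y d * ux i (t2,y) - x d * ux i (t2,x)\<bar> \<le> 2 * N * (KR * cd (t1,x) (t2,y))"
  proof (cases "x d > R \<and> y d > R")
    case True
    then show ?thesis using Z2[OF mid _ i] Z2[OF Q _ i] KR0 N0 c0 by simp
  next
    case False
    then have sg: "sig d x y \<le> KR * cd (t1,x) (t2,y)" using sig_K[OF PH QH _ c] by auto
    have "2 * N * sig d x y \<le> 2 * N * (KR * cd (t1,x) (t2,y))" using sg N0 by (intro mult_left_mono) auto
    then show ?thesis using GP[OF mid Q i] by linarith
  qed
  have tp: "\<bar>x d * ux i (t1,x) - x d * ux i (t2,x)\<bar> \<le> 4 * N * sqrt R * cd (t1,x) (t2,y)"
  proof -
    have "4 * N * sqrt R * sqrt \<bar>t1 - t2\<bar> \<le> 4 * N * sqrt R * cd (t1,x) (t2,y)"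
      using dt_le(2)[OF PH QH c] N0 R0 by (intro mult_left_mono) auto
    then show ?thesis using GT[OF P mid i] by linarith
  qed
  have "\<bar>x d * ux i (t1,x) - y d * ux i (t2,y)\<bar> \<le> 4 * N * sqrt R * cd (t1,x) (t2,y) + 2 * N * (KR * cd (t1,x) (t2,y))"
    using sp tp by linarith
  also have "\<dots> = LG * N * cd (t1,x) (t2,y)" unfolding LG_def by (simp add: algebra_simps)
  finally show ?thesis .
qed

abbreviation "ap n P \<equiv> apx T d n P"

lemma ap_I: "P \<in> H \<Longrightarrow> ap n P \<in> I" using apx_in[OF T0 d1] .

lemma ext_pt:
  fixes \<phi> :: "real \<times> (nat \<Rightarrow> real) \<Rightarrow> real"
  assumes "(\<lambda>n. \<phi> (ap n P)) \<longlonglongrightarrow> \<phi> P" "\<And>n. \<bar>\<phi> (ap n P)\<bar> \<le> B"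
  shows "\<bar>\<phi> P\<bar> \<le> B"
  using LIMSEQ_le_const2[OF tendsto_rabs[OF assms(1)]] assms(2) by blast

lemma ext_pair:
  fixes \<phi> :: "real \<times> (nat \<Rightarrow> real) \<Rightarrow> real"
  assumes P: "P \<in> H" and Q: "Q \<in> H" and A: "A \<ge> 0"
    and l1: "(\<lambda>n. \<phi> (ap n P)) \<longlonglongrightarrow> \<phi> P" and l2: "(\<lambda>n. \<phi> (ap n Q)) \<longlonglongrightarrow> \<phi> Q"
    and b: "\<And>n. \<bar>\<phi> (ap n P) - \<phi> (ap n Q)\<bar> \<le> A * cd (ap n P) (ap n Q) powr \<alpha>"
  shows "\<bar>\<phi> P - \<phi> Q\<bar> \<le> A * cd P Q powr \<alpha>"
proof -
  have "\<bar>\<phi> (ap n P) - \<phi> (ap n Q)\<bar> \<le> A * cd P Q powr \<alpha>" for n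
  proof -
    have nn: "0 \<le> cd (ap n P) (ap n Q)"
      using ap_I[OF P, of n] ap_I[OF Q, of n]
      by (cases "ap n P", cases "ap n Q") (auto intro!: cyc_nonneg simp: HTint_iff Hint_def)
    have "cd (ap n P) (ap n Q) powr \<alpha> \<le> cd P Q powr \<alpha>"
      using apx_dist[OF T0 d1 P Q, of n] nn a0 by (intro powr_mono2) auto
    then have "A * cd (ap n P) (ap n Q) powr \<alpha> \<le> A * cd P Q powr \<alpha>" using A by (intro mult_left_mono) auto
    then show ?thesis using b[of n] by linarith
  qed
  then show ?thesis
    using LIMSEQ_le_const2[OF tendsto_rabs[OF tendsto_diff[OF l1 l2]]] by blast
qed

definition "wn n = (sqrt (1 / (real n + 1)) + sqrt (T / (real n + 1))) powr \<alpha>"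

lemma wn0: "wn \<longlonglongrightarrow> 0" unfolding wn_def using wn_lim_powr[OF T0 a0] .

lemma cd_ap_powr: "P \<in> H \<Longrightarrow> cd P (ap n P) powr \<alpha> \<le> wn n"
proof -
  assume P: "P \<in> H"
  have nn: "0 \<le> cd P (ap n P)"
    using ap_I[OF P, of n] P
    by (cases "ap n P", cases P) (auto intro!: cyc_nonneg simp: HTint_iff Hint_def HTbar_mem)
  show ?thesis unfolding wn_def using apx_close[OF T0 d1 P, of n] nn a0 by (intro powr_mono2) auto
qed

lemma conv_holder:
  assumes P: "P \<in> H" and h: "\<And>P Q. P \<in> H \<Longrightarrow> Q \<in> H \<Longrightarrow> \<bar>f P - f Q\<bar> \<le> N * cd P Q powr \<alpha>"
  shows "(\<lambda>n. f (ap n P)) \<longlonglongrightarrow> f P"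
proof -
  have "(\<lambda>n. f (ap n P) - f P) \<longlonglongrightarrow> 0"
  proof (rule Lim_null_comparison)
    show "\<forall>\<^sub>F n in sequentially. norm (f (ap n P) - f P) \<le> N * wn n"
    proof (intro always_eventually allI)
      fix n
      have "\<bar>f P - f (ap n P)\<bar> \<le> N * cd P (ap n P) powr \<alpha>" using h[OF P HTint_sub[OF ap_I[OF P]]] .
      also have "\<dots> \<le> N * wn n" using cd_ap_powr[OF P] N0 by (intro mult_left_mono) auto
      finally show "norm (f (ap n P) - f P) \<le> N * wn n" by (simp add: abs_minus_commute)
    qed
    show "(\<lambda>n. N * wn n) \<longlonglongrightarrow> 0" using tendsto_mult_right_zero[OF wn0] .
  qed
  then show ?thesis by (simp add: LIM_zero_iff)
qed

lemma conv_g: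
  assumes P: "P \<in> H" and i: "i \<in> {1..d}"
  shows "(\<lambda>n. snd (ap n P) d * ux i (ap n P)) \<longlonglongrightarrow> snd P d * ux i P"
proof -
  have "(\<lambda>n. snd (ap n P) d * ux i (ap n P) - snd P d * ux i P) \<longlonglongrightarrow> 0"
  proof (rule Lim_null_comparison)
    show "\<forall>\<^sub>F n in sequentially. norm (snd (ap n P) d * ux i (ap n P) - snd P d * ux i P)
        \<le> snd P d * (N * wn n) + N * (1 / (real n + 1))"
    proof (intro always_eventually allI)
      fix n
      have xd: "snd P d \<ge> 0" using P by (cases P) (simp add: HTbar_mem)
      have e: "snd (ap n P) d = snd P d + 1 / (real n + 1)" unfolding apx_def by simp
      have "snd (ap n P) d * ux i (ap n P) - snd P d * ux i P
          = snd P d * (ux i (ap n P) - ux i P) + (1 / (real n + 1)) * ux i (ap n P)"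
        unfolding e by (simp add: algebra_simps)
      then have "\<bar>snd (ap n P) d * ux i (ap n P) - snd P d * ux i P\<bar>
          \<le> snd P d * \<bar>ux i (ap n P) - ux i P\<bar> + (1 / (real n + 1)) * \<bar>ux i (ap n P)\<bar>"
      proof -
        have "\<bar>snd P d * (ux i (ap n P) - ux i P) + (1 / (real n + 1)) * ux i (ap n P)\<bar>
           \<le> \<bar>snd P d * (ux i (ap n P) - ux i P)\<bar> + \<bar>(1 / (real n + 1)) * ux i (ap n P)\<bar>"
          by (rule abs_triangle_ineq)
        also have "\<dots> = snd P d * \<bar>ux i (ap n P) - ux i P\<bar> + (1 / (real n + 1)) * \<bar>ux i (ap n P)\<bar>"
          using xd by (simp add: abs_mult)
        finally show ?thesis using \<open>snd (ap n P) d * ux i (ap n P) - snd P d * ux i P = _\<close> by simp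
      qed
      also have "\<dots> \<le> snd P d * (N * wn n) + (1 / (real n + 1)) * N"
      proof (intro add_mono mult_left_mono)
        have "\<bar>ux i P - ux i (ap n P)\<bar> \<le> N * cd P (ap n P) powr \<alpha>"
          using uxH[OF i P HTint_sub[OF ap_I[OF P]]] .
        also have "\<dots> \<le> N * wn n" using cd_ap_powr[OF P] N0 by (intro mult_left_mono) auto
        finally show "\<bar>ux i (ap n P) - ux i P\<bar> \<le> N * wn n" by (simp add: abs_minus_commute)
        show "\<bar>ux i (ap n P)\<bar> \<le> N" using uxN[OF i HTint_sub[OF ap_I[OF P]]] .
      qed (use xd in auto)
      finally show "norm (snd (ap n P) d * ux i (ap n P) - snd P d * ux i P)
          \<le> snd P d * (N * wn n) + N * (1 / (real n + 1))" by (simp add: mult.commute)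
    qed
    show "(\<lambda>n. snd P d * (N * wn n) + N * (1 / (real n + 1))) \<longlonglongrightarrow> 0"
      using tendsto_add[OF tendsto_mult_right_zero[OF tendsto_mult_right_zero[OF wn0]]
          tendsto_mult_right_zero[OF inv_lim]] by simp
  qed
  then show ?thesis by (simp add: LIM_zero_iff)
qed

end



context setting begin

lemma ap_split: "P \<in> H \<Longrightarrow> \<exists>t x. ap n P = (t,x) \<and> (t,x) \<in> I"
proof -
  assume "P \<in> H"
  then have "ap n P \<in> I" by (rule ap_I)
  then show ?thesis by (cases "ap n P") auto
qed

lemma UXall:
  assumes P: "P \<in> H" and i: "i \<in> {1..d}" and e: "e > 0"
  shows "\<bar>ux i P\<bar> \<le> e * N + 2 * M * e powr (-(2/\<alpha>))"
proof (rule ext_pt[OF conv_holder[OF P uxH[OF i]]])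
  fix n
  obtain t x where tx: "ap n P = (t,x)" "(t,x) \<in> I" using ap_split[OF P] by blast
  define h where "h = e powr (2/\<alpha>)"
  have h0: "h > 0" unfolding h_def using e by simp
  have "\<bar>ux i (t,x)\<bar> \<le> 2 * M / h + N * h powr (\<alpha>/2)" using EU[OF tx(2) i h0] .
  also have "h powr (\<alpha>/2) = e" unfolding h_def using e a0 by (simp add: powr_powr)
  also have "2 * M / h = 2 * M * e powr (-(2/\<alpha>))" unfolding h_def by (simp add: powr_minus divide_inverse)
  finally show "\<bar>ux i (ap n P)\<bar> \<le> e * N + 2 * M * e powr (-(2/\<alpha>))" using tx by (simp add: mult.commute)
qed

lemma FAll:
  assumes P: "P \<in> H" and i: "i \<in> {1..d}" and j: "j \<in> {1..d}" and h: "0 < h" "h \<le> 1"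
    and G: "\<And>Q. Q \<in> H \<Longrightarrow> \<bar>ux i Q\<bar> \<le> G"
  shows "\<bar>F i j P\<bar> \<le> 2 * (R + 1) * G / h + N * h powr (\<alpha>/2)"
proof (rule ext_pt[OF conv_holder[OF P FH[OF i j]]])
  fix n
  obtain t x where tx: "ap n P = (t,x)" "(t,x) \<in> I" using ap_split[OF P] by blast
  show "\<bar>F i j (ap n P)\<bar> \<le> 2 * (R + 1) * G / h + N * h powr (\<alpha>/2)"
    using EF[OF tx(2) i j h G] tx(1) by simp
qed

lemma UHold:
  assumes P: "P \<in> H" and Q: "Q \<in> H" and \<delta>: "0 < \<delta>" "\<delta> \<le> 1"
  shows "\<bar>u P - u Q\<bar> \<le> ((KR + 1) * N * \<delta> powr (1 - \<alpha>) + 2 * M * \<delta> powr (-\<alpha>)) * cd P Q powr \<alpha>"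
proof (rule ext_pair[OF P Q _ conv_holder[OF P uN(2)] conv_holder[OF Q uN(2)]])
  show "0 \<le> (KR + 1) * N * \<delta> powr (1 - \<alpha>) + 2 * M * \<delta> powr (-\<alpha>)"
    using KR0 N0 M0 by simp
  fix n
  obtain t1 x where tx: "ap n P = (t1,x)" "(t1,x) \<in> I" using ap_split[OF P] by blast
  obtain t2 y where ty: "ap n Q = (t2,y)" "(t2,y) \<in> I" using ap_split[OF Q] by blast
  have "\<bar>u (t1,x) - u (t2,y)\<bar> \<le> ((KR + 1) * N * \<delta> powr (1 - \<alpha>) + 2 * M * \<delta> powr (-\<alpha>)) * cd (t1,x) (t2,y) powr \<alpha>"
  proof (rule holder_split[OF _ _ M0 _ _ \<delta> a0 a1])
    show "0 \<le> cd (t1,x) (t2,y)" using tx ty by (intro cyc_nonneg) (auto simp: HTint_iff Hint_def)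
    show "0 \<le> (KR + 1) * N" using KR0 N0 by simp
    show "\<bar>u (t1,x) - u (t2,y)\<bar> \<le> 2 * M" using uM[OF HTint_sub[OF tx(2)]] uM[OF HTint_sub[OF ty(2)]] by linarith
    show "\<bar>u (t1,x) - u (t2,y)\<bar> \<le> (KR + 1) * N * cd (t1,x) (t2,y)" if "cd (t1,x) (t2,y) \<le> 1"
      using ULip[OF tx(2) ty(2) that] .
  qed
  then show "\<bar>u (ap n P) - u (ap n Q)\<bar> \<le> ((KR + 1) * N * \<delta> powr (1 - \<alpha>) + 2 * M * \<delta> powr (-\<alpha>)) * cd (ap n P) (ap n Q) powr \<alpha>"
    using tx ty by simp
qed

lemma Gsup:
  assumes P: "P \<in> H" and i: "i \<in> {1..d}" and G: "\<And>Q. Q \<in> H \<Longrightarrow> \<bar>ux i Q\<bar> \<le> G"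
  shows "\<bar>snd P d * ux i P\<bar> \<le> R * G"
proof (rule ext_pt[where \<phi> = "\<lambda>P. snd P d * ux i P", OF conv_g[OF P i]])
  fix n
  obtain t x where tx: "ap n P = (t,x)" "(t,x) \<in> I" using ap_split[OF P] by blast
  have G0: "0 \<le> G" using G[OF HTint_sub[OF tx(2)]] by linarith
  have xd: "x d > 0" using tx by (simp add: HTint_iff Hint_def)
  have "\<bar>x d * ux i (t,x)\<bar> \<le> R * G"
  proof (cases "x d > R")
    case True then show ?thesis using Z2[OF tx(2) True i] G0 R0 by simp
  next
    case False
    have "\<bar>x d * ux i (t,x)\<bar> = x d * \<bar>ux i (t,x)\<bar>" using xd by (simp add: abs_mult)
    also have "\<dots> \<le> R * G" using False G[OF HTint_sub[OF tx(2)]] xd G0 by (intro mult_mono) auto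
    finally show ?thesis .
  qed
  then show "\<bar>snd (ap n P) d * ux i (ap n P)\<bar> \<le> R * G" using tx by simp
qed

lemma GHold:
  assumes P: "P \<in> H" and Q: "Q \<in> H" and \<delta>: "0 < \<delta>" "\<delta> \<le> 1" and i: "i \<in> {1..d}"
    and G: "\<And>Q. Q \<in> H \<Longrightarrow> \<bar>ux i Q\<bar> \<le> G"
  shows "\<bar>snd P d * ux i P - snd Q d * ux i Q\<bar> \<le> (LG * N * \<delta> powr (1 - \<alpha>) + 2 * (R * G) * \<delta> powr (-\<alpha>)) * cd P Q powr \<alpha>"
proof (rule ext_pair[where \<phi> = "\<lambda>P. snd P d * ux i P", OF P Q _ conv_g[OF P i] conv_g[OF Q i]])
  have G0: "0 \<le> G" using G[OF P] by linarith
  show "0 \<le> LG * N * \<delta> powr (1 - \<alpha>) + 2 * (R * G) * \<delta> powr (-\<alpha>)"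
    using LG0 N0 G0 R0 by simp
  fix n
  obtain t1 x where tx: "ap n P = (t1,x)" "(t1,x) \<in> I" using ap_split[OF P] by blast
  obtain t2 y where ty: "ap n Q = (t2,y)" "(t2,y) \<in> I" using ap_split[OF Q] by blast
  have "\<bar>x d * ux i (t1,x) - y d * ux i (t2,y)\<bar> \<le> (LG * N * \<delta> powr (1 - \<alpha>) + 2 * (R * G) * \<delta> powr (-\<alpha>)) * cd (t1,x) (t2,y) powr \<alpha>"
  proof (rule holder_split[OF _ _ _ _ _ \<delta> a0 a1])
    show "0 \<le> cd (t1,x) (t2,y)" using tx ty by (intro cyc_nonneg) (auto simp: HTint_iff Hint_def)
    show "0 \<le> LG * N" using LG0 N0 by simp
    show "0 \<le> R * G" using R0 G0 by simp
    show "\<bar>x d * ux i (t1,x) - y d * ux i (t2,y)\<bar> \<le> 2 * (R * G)"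
      using Gsup[OF HTint_sub[OF tx(2)] i G] Gsup[OF HTint_sub[OF ty(2)] i G] by simp
    show "\<bar>x d * ux i (t1,x) - y d * ux i (t2,y)\<bar> \<le> LG * N * cd (t1,x) (t2,y)" if "cd (t1,x) (t2,y) \<le> 1"
      using GLip[OF tx(2) ty(2) that i] .
  qed
  then show "\<bar>snd (ap n P) d * ux i (ap n P) - snd (ap n Q) d * ux i (ap n Q)\<bar> \<le> (LG * N * \<delta> powr (1 - \<alpha>) + 2 * (R * G) * \<delta> powr (-\<alpha>)) * cd (ap n P) (ap n Q) powr \<alpha>"
    using tx ty by simp
qed

lemma norm_u:
  assumes "0 < \<delta>" "\<delta> \<le> 1"
  shows "holder_norm d \<alpha> H u \<le> M + ((KR + 1) * N * \<delta> powr (1 - \<alpha>) + 2 * M * \<delta> powr (-\<alpha>))"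
  unfolding holder_norm_def M_def[symmetric]
  using semi_least[OF T0 d1, of u, OF UHold[OF _ _ assms]] by simp

lemma norm_ux:
  assumes "i \<in> {1..d}" "e > 0"
  shows "sup_norm H (ux i) \<le> e * N + 2 * M * e powr (-(2/\<alpha>))"
  using sup_least[OF Hne, of "ux i"] UXall[OF _ assms] by blast

lemma norm_g:
  assumes "0 < \<delta>" "\<delta> \<le> 1" "i \<in> {1..d}" and G: "\<And>Q. Q \<in> H \<Longrightarrow> \<bar>ux i Q\<bar> \<le> G"
  shows "holder_norm d \<alpha> H (\<lambda>P. snd P d * ux i P) \<le> R * G + (LG * N * \<delta> powr (1 - \<alpha>) + 2 * (R * G) * \<delta> powr (-\<alpha>))"
proof -
  have "sup_norm H (\<lambda>P. snd P d * ux i P) \<le> R * G"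
    using sup_least[OF Hne, of "\<lambda>P. snd P d * ux i P"] Gsup[OF _ assms(3) G] by blast
  moreover have "holder_semi d \<alpha> H (\<lambda>P. snd P d * ux i P) \<le> LG * N * \<delta> powr (1 - \<alpha>) + 2 * (R * G) * \<delta> powr (-\<alpha>)"
    using semi_least[OF T0 d1, of "\<lambda>P. snd P d * ux i P", OF GHold[OF _ _ assms(1,2,3) G]] by simp
  ultimately show ?thesis unfolding holder_norm_def by linarith
qed

lemma norm_F:
  assumes "i \<in> {1..d}" "j \<in> {1..d}" "0 < h" "h \<le> 1" and G: "\<And>Q. Q \<in> H \<Longrightarrow> \<bar>ux i Q\<bar> \<le> G"
  shows "sup_norm H (F i j) \<le> 2 * (R + 1) * G / h + N * h powr (\<alpha>/2)"
  using sup_least[OF Hne, of "F i j"] FAll[OF _ assms(1-4) G] by blast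

end



lemma powr_div_neg: fixes x c q :: real shows "0 < x \<Longrightarrow> 0 < c \<Longrightarrow> (x / c) powr (-q) = c powr q * x powr (-q)"
  by (simp add: powr_divide powr_minus field_simps)

lemma powr_mul_neg: fixes x y q :: real shows "0 < x \<Longrightarrow> 0 < y \<Longrightarrow> (x * y) powr (-q) = x powr (-q) * y powr (-q)"
  by (simp add: powr_mult)

lemma powr_le_one_base: fixes x q :: real shows "0 \<le> x \<Longrightarrow> x \<le> 1 \<Longrightarrow> 0 \<le> q \<Longrightarrow> x powr q \<le> 1"
  using powr_mono'[of 0 q x] by (cases "x = 0") auto

lemma eps_exp: fixes \<epsilon> p m :: real shows "0 < \<epsilon> \<Longrightarrow> \<epsilon> < 1 \<Longrightarrow> p \<le> m \<Longrightarrow> \<epsilon> powr (-p) \<le> \<epsilon> powr (-m)"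
  by (rule powr_mono') auto

context setting begin

definition "aa = 2 / \<alpha>"
definition "bb = 1 / (1 - \<alpha>)"
definition "mm = 2 * aa + aa * aa + (aa + 1) * \<alpha> * bb"

lemma aa0: "aa > 0" unfolding aa_def using a0 by simp
lemma bb0: "bb > 0" unfolding bb_def using a1 by simp
lemma bbal: "bb * (1 - \<alpha>) = 1" unfolding bb_def using a1 by simp
lemma aaal: "aa * (\<alpha> / 2) = 1" unfolding aa_def using a0 by simp

lemma mm_ge: "\<alpha> * bb \<le> mm" "aa \<le> mm" "aa + aa * aa + aa \<le> mm" "aa + bb * \<alpha> * (aa + 1) \<le> mm"
  unfolding mm_def using aa0 bb0 a0
  by (auto simp: algebra_simps intro!: add_increasing mult_nonneg_nonneg)

lemma mm_pos: "mm > 0" using mm_ge(2) aa0 by linarith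

lemma E1: "0 < \<epsilon> \<Longrightarrow> \<epsilon> < 1 \<Longrightarrow> 1 \<le> \<epsilon> powr (-mm)"
  using eps_exp[of \<epsilon> 0 mm] mm_pos by simp

definition "c1 = 1 + 2 * (KR + 2) powr (\<alpha> * bb)"

lemma R1:
  assumes e: "0 < \<epsilon>" "\<epsilon> < 1"
  shows "holder_norm d \<alpha> H u \<le> \<epsilon> * N + c1 * \<epsilon> powr (-mm) * M"
proof -
  define \<delta> where "\<delta> = (\<epsilon> / (KR + 2)) powr bb"
  have K2: "KR + 2 > 0" using KR0 by simp
  have q0: "0 < \<epsilon> / (KR + 2)" "\<epsilon> / (KR + 2) \<le> 1" using e K2 KR0 by (auto simp: field_simps)
  have d0: "0 < \<delta>" unfolding \<delta>_def using q0 e K2 by simp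
  have d1': "\<delta> \<le> 1" unfolding \<delta>_def using q0 bb0 by (intro powr_le_one_base) auto
  have dp: "\<delta> powr (1 - \<alpha>) = \<epsilon> / (KR + 2)" unfolding \<delta>_def using q0 e K2 by (simp add: powr_powr bbal)
  have dm: "\<delta> powr (-\<alpha>) = (KR + 2) powr (\<alpha> * bb) * \<epsilon> powr (-(\<alpha> * bb))"
  proof -
    have "\<delta> powr (-\<alpha>) = (\<epsilon> / (KR + 2)) powr (-(\<alpha> * bb))" unfolding \<delta>_def using q0
      by (simp add: powr_powr mult.commute)
    also have "\<dots> = (KR + 2) powr (\<alpha> * bb) * \<epsilon> powr (-(\<alpha> * bb))" by (rule powr_div_neg[OF e(1) K2])
    finally show ?thesis .
  qed
  have A: "holder_norm d \<alpha> H u \<le> M + ((KR + 1) * N * \<delta> powr (1 - \<alpha>) + 2 * M * \<delta> powr (-\<alpha>))"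
    using norm_u[OF d0 d1'] .
  have B: "(KR + 1) * N * \<delta> powr (1 - \<alpha>) \<le> \<epsilon> * N"
  proof -
    have "(KR + 1) * N * \<delta> powr (1 - \<alpha>) = ((KR + 1) / (KR + 2)) * (\<epsilon> * N)" unfolding dp by simp
    also have "\<dots> \<le> 1 * (\<epsilon> * N)" using K2 e N0 by (intro mult_right_mono) auto
    finally show ?thesis by simp
  qed
  have C: "M \<le> \<epsilon> powr (-mm) * M" using E1[OF e] M0 by (simp add: mult_le_cancel_right1)
  have D: "2 * M * \<delta> powr (-\<alpha>) \<le> 2 * (KR + 2) powr (\<alpha> * bb) * \<epsilon> powr (-mm) * M"
  proof -
    have "\<epsilon> powr (-(\<alpha> * bb)) \<le> \<epsilon> powr (-mm)" using eps_exp[OF e mm_ge(1)] .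
    then have "2 * M * ((KR + 2) powr (\<alpha> * bb) * \<epsilon> powr (-(\<alpha> * bb))) \<le> 2 * M * ((KR + 2) powr (\<alpha> * bb) * \<epsilon> powr (-mm))"
      using M0 by (intro mult_left_mono) auto
    then show ?thesis unfolding dm by (simp add: algebra_simps)
  qed
  have "c1 * \<epsilon> powr (-mm) * M = \<epsilon> powr (-mm) * M + 2 * (KR + 2) powr (\<alpha> * bb) * \<epsilon> powr (-mm) * M"
    unfolding c1_def by (simp add: algebra_simps)
  then show ?thesis using A B C D by linarith
qed

lemma R2:
  assumes e: "0 < \<epsilon>" "\<epsilon> < 1" and i: "i \<in> {1..d}"
  shows "sup_norm H (ux i) \<le> \<epsilon> * N + 2 * \<epsilon> powr (-mm) * M"
proof -
  have "sup_norm H (ux i) \<le> \<epsilon> * N + 2 * M * \<epsilon> powr (-(2/\<alpha>))" using norm_ux[OF i e(1)] .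
  also have "\<epsilon> powr (-(2/\<alpha>)) \<le> \<epsilon> powr (-mm)" using eps_exp[OF e mm_ge(2)] unfolding aa_def .
  then have "2 * M * \<epsilon> powr (-(2/\<alpha>)) \<le> 2 * M * \<epsilon> powr (-mm)" using M0 by (intro mult_left_mono) auto
  finally show ?thesis by (simp add: algebra_simps)
qed

end



context setting begin

definition "c3 = 6 * R * (6 * (R + 1)) powr aa * (2 * (LG + 1)) powr (bb * \<alpha> * (aa + 1))"
definition "c4 = 4 * (R + 1) * (4 * (R + 1)) powr aa * 2 powr (aa * aa) * 2 powr aa"

lemma R3:
  assumes e: "0 < \<epsilon>" "\<epsilon> < 1" and i: "i \<in> {1..d}"
  shows "holder_norm d \<alpha> H (\<lambda>P. snd P d * ux i P) \<le> \<epsilon> * N + c3 * \<epsilon> powr (-mm) * M"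
proof -
  define L2 where "L2 = 2 * (LG + 1)"
  have L2: "L2 > 0" unfolding L2_def using LG0 by simp
  have q0: "0 < \<epsilon> / L2" "\<epsilon> / L2 \<le> 1" using e L2 LG0 unfolding L2_def by (auto simp: field_simps)
  define \<delta> where "\<delta> = (\<epsilon> / L2) powr bb"
  have d0: "0 < \<delta>" unfolding \<delta>_def using q0 e L2 by simp
  have d1': "\<delta> \<le> 1" unfolding \<delta>_def using q0 bb0 by (intro powr_le_one_base) auto
  have dp: "\<delta> powr (1 - \<alpha>) = \<epsilon> / L2" unfolding \<delta>_def using q0 e L2 by (simp add: powr_powr bbal)
  define X where "X = \<delta> powr (-\<alpha>)"
  have X1: "1 \<le> X" unfolding X_def using powr_mono'[of "-\<alpha>" 0 \<delta>] d0 d1' a0 by simp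
  have dX: "\<delta> powr \<alpha> * X = 1" unfolding X_def using d0 by (simp add: powr_add[symmetric])
  define e' where "e' = \<epsilon> * \<delta> powr \<alpha> / (6 * (R + 1))"
  have e'0: "e' > 0" unfolding e'_def using e d0 R0 by simp
  define Y where "Y = e' powr (-aa)"
  define G where "G = e' * N + 2 * M * Y"
  have Gb: "\<And>Q. Q \<in> H \<Longrightarrow> \<bar>ux i Q\<bar> \<le> G" unfolding G_def Y_def aa_def using UXall[OF _ i e'0] by simp
  have G0: "0 \<le> G" unfolding G_def Y_def using e'0 N0 M0 by simp
  have A: "holder_norm d \<alpha> H (\<lambda>P. snd P d * ux i P) \<le> R * G + (LG * N * \<delta> powr (1 - \<alpha>) + 2 * (R * G) * X)"
    unfolding X_def using norm_g[OF d0 d1' i Gb] .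
  have B: "R * G \<le> R * G * X" using mult_left_mono[OF X1, of "R * G"] R0 G0 by simp
  have C: "3 * (R * G * X) = 3 * R * N * (e' * X) + 6 * R * M * (Y * X)" unfolding G_def by (simp add: algebra_simps)
  have D: "LG * N * \<delta> powr (1 - \<alpha>) \<le> \<epsilon> * N / 2"
  proof -
    have "LG * N * \<delta> powr (1 - \<alpha>) = (\<epsilon> * N / 2) * (LG / (LG + 1))" unfolding dp L2_def by (simp add: field_simps)
    also have "\<dots> \<le> (\<epsilon> * N / 2) * 1" using LG0 e N0 by (intro mult_left_mono) auto
    finally show ?thesis by simp
  qed
  have E: "3 * R * N * (e' * X) \<le> \<epsilon> * N / 2"
  proof -
    have "e' * X = \<epsilon> / (6 * (R + 1))" unfolding e'_def using dX by (simp add: field_simps)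
    then have "3 * R * N * (e' * X) = 3 * R * N * (\<epsilon> / (6 * (R + 1)))" by simp
    also have "\<dots> = (\<epsilon> * N / 2) * (R / (R + 1))" using R0 by (simp add: field_simps)
    also have "\<dots> \<le> (\<epsilon> * N / 2) * 1" using R0 e N0 by (intro mult_left_mono) auto
    finally show ?thesis by simp
  qed
  have F: "Y * X = (6 * (R + 1)) powr aa * (2 * (LG + 1)) powr (bb * \<alpha> * (aa + 1)) * \<epsilon> powr (-(aa + bb * \<alpha> * (aa + 1)))"
  proof -
    have pos: "0 < \<epsilon> * \<delta> powr \<alpha>" "0 < 6 * (R + 1)" using e d0 R0 by auto
    have "Y = (6 * (R + 1)) powr aa * (\<epsilon> * \<delta> powr \<alpha>) powr (-aa)"
      unfolding Y_def e'_def by (rule powr_div_neg[OF pos])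
    also have "(\<epsilon> * \<delta> powr \<alpha>) powr (-aa) = \<epsilon> powr (-aa) * \<delta> powr (-(\<alpha> * aa))"
      using e d0 by (simp add: powr_mult powr_powr)
    finally have Ye: "Y = (6 * (R + 1)) powr aa * (\<epsilon> powr (-aa) * \<delta> powr (-(\<alpha> * aa)))" .
    have "\<delta> powr (-(\<alpha> * aa)) * X = \<delta> powr (-(\<alpha> * (aa + 1)))" unfolding X_def
      by (simp add: powr_add[symmetric] algebra_simps)
    also have "\<dots> = (\<epsilon> / L2) powr (-(bb * \<alpha> * (aa + 1)))" unfolding \<delta>_def using q0
      by (simp add: powr_powr algebra_simps)
    also have "\<dots> = L2 powr (bb * \<alpha> * (aa + 1)) * \<epsilon> powr (-(bb * \<alpha> * (aa + 1)))"
      by (rule powr_div_neg[OF e(1) L2])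
    finally have dd: "\<delta> powr (-(\<alpha> * aa)) * X = L2 powr (bb * \<alpha> * (aa + 1)) * \<epsilon> powr (-(bb * \<alpha> * (aa + 1)))" .
    have ee: "\<epsilon> powr (-aa) * \<epsilon> powr (-(bb * \<alpha> * (aa + 1))) = \<epsilon> powr (-(aa + bb * \<alpha> * (aa + 1)))"
      by (simp add: powr_add[symmetric])
    have "Y * X = (6 * (R + 1)) powr aa * \<epsilon> powr (-aa) * (\<delta> powr (-(\<alpha> * aa)) * X)"
      unfolding Ye by (simp add: algebra_simps)
    also have "\<dots> = (6 * (R + 1)) powr aa * L2 powr (bb * \<alpha> * (aa + 1)) * (\<epsilon> powr (-aa) * \<epsilon> powr (-(bb * \<alpha> * (aa + 1))))"
      unfolding dd by (simp add: algebra_simps)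
    finally show ?thesis unfolding ee L2_def .
  qed
  have Fb: "6 * R * M * (Y * X) \<le> c3 * \<epsilon> powr (-mm) * M"
  proof -
    have "6 * R * M * (Y * X) = c3 * M * \<epsilon> powr (-(aa + bb * \<alpha> * (aa + 1)))" unfolding F c3_def
      by (simp add: algebra_simps)
    also have "\<dots> \<le> c3 * M * \<epsilon> powr (-mm)"
      using eps_exp[OF e mm_ge(4)] M0 R0 unfolding c3_def by (intro mult_left_mono) auto
    finally show ?thesis by (simp add: algebra_simps)
  qed
  show ?thesis using A B C D E Fb by linarith
qed

lemma R4:
  assumes e: "0 < \<epsilon>" "\<epsilon> < 1" and i: "i \<in> {1..d}" and j: "j \<in> {1..d}"
  shows "sup_norm H (F i j) \<le> \<epsilon> * N + c4 * \<epsilon> powr (-mm) * M"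
proof -
  have q0: "0 < \<epsilon> / 2" "\<epsilon> / 2 \<le> 1" using e by auto
  define h where "h = (\<epsilon> / 2) powr aa"
  have h0: "0 < h" unfolding h_def using e by simp
  have h1: "h \<le> 1" unfolding h_def using q0 aa0 by (intro powr_le_one_base) auto
  have hp: "h powr (\<alpha> / 2) = \<epsilon> / 2" unfolding h_def powr_powr aaal using q0 by simp
  define e' where "e' = \<epsilon> * h / (4 * (R + 1))"
  have e'0: "e' > 0" unfolding e'_def using e h0 R0 by simp
  define Y where "Y = e' powr (-aa)"
  define G where "G = e' * N + 2 * M * Y"
  have Gb: "\<And>Q. Q \<in> H \<Longrightarrow> \<bar>ux i Q\<bar> \<le> G" unfolding G_def Y_def aa_def using UXall[OF _ i e'0] by simp
  have A: "sup_norm H (F i j) \<le> 2 * (R + 1) * G / h + N * h powr (\<alpha>/2)"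
    using norm_F[OF i j h0 h1 Gb] .
  have C: "2 * (R + 1) * G / h = 2 * (R + 1) * e' / h * N + 4 * (R + 1) * M * (Y / h)"
    unfolding G_def using h0 by (simp add: field_simps)
  have D: "2 * (R + 1) * e' / h = \<epsilon> / 2"
  proof -
    have "2 * (R + 1) * e' = \<epsilon> * h / 2" unfolding e'_def using R0 by (simp add: field_simps)
    then show ?thesis using h0 by simp
  qed
  have F: "Y / h = (4 * (R + 1)) powr aa * 2 powr (aa * aa) * 2 powr aa * \<epsilon> powr (-(aa + aa * aa + aa))"
  proof -
    have pos: "0 < \<epsilon> * h" "0 < 4 * (R + 1)" using e h0 R0 by auto
    have "Y = (4 * (R + 1)) powr aa * (\<epsilon> * h) powr (-aa)"
      unfolding Y_def e'_def by (rule powr_div_neg[OF pos])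
    also have "(\<epsilon> * h) powr (-aa) = \<epsilon> powr (-aa) * h powr (-aa)"
      using e h0 by (simp add: powr_mult)
    finally have Ye: "Y = (4 * (R + 1)) powr aa * (\<epsilon> powr (-aa) * h powr (-aa))" .
    have "h powr (-(aa + 1)) = h powr (-aa + (-1))" by simp
    also have "\<dots> = h powr (-aa) * h powr (-1)" by (rule powr_add)
    finally have "h powr (-(aa + 1)) = h powr (-aa) * h powr (-1)" .
    moreover have "h powr (-1) = inverse h" using h0 by (simp add: powr_minus)
    ultimately have "h powr (-aa) / h = h powr (-(aa + 1))" by (simp add: divide_inverse)
    also have "\<dots> = (\<epsilon> / 2) powr (-(aa * aa + aa))" unfolding h_def using q0
      by (simp add: powr_powr algebra_simps)
    also have "\<dots> = 2 powr (aa * aa + aa) * \<epsilon> powr (-(aa * aa + aa))"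
      by (rule powr_div_neg) (use e in auto)
    also have "\<dots> = 2 powr (aa * aa) * 2 powr aa * \<epsilon> powr (-(aa * aa + aa))"
      by (simp add: powr_add)
    finally have hh: "h powr (-aa) / h = 2 powr (aa * aa) * 2 powr aa * \<epsilon> powr (-(aa * aa + aa))" .
    have ee: "\<epsilon> powr (-aa) * \<epsilon> powr (-(aa * aa + aa)) = \<epsilon> powr (-(aa + aa * aa + aa))"
    proof -
      have "-(aa + aa * aa + aa) = -aa + (-(aa * aa + aa))" by simp
      then show ?thesis by (simp only: powr_add)
    qed
    have "Y / h = (4 * (R + 1)) powr aa * \<epsilon> powr (-aa) * (h powr (-aa) / h)"
      unfolding Ye by (simp add: algebra_simps)
    also have "\<dots> = (4 * (R + 1)) powr aa * 2 powr (aa * aa) * 2 powr aa * (\<epsilon> powr (-aa) * \<epsilon> powr (-(aa * aa + aa)))"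
      unfolding hh by (simp add: algebra_simps)
    finally show ?thesis unfolding ee .
  qed
  have Fb: "4 * (R + 1) * M * (Y / h) \<le> c4 * \<epsilon> powr (-mm) * M"
  proof -
    have "4 * (R + 1) * M * (Y / h) = c4 * M * \<epsilon> powr (-(aa + aa * aa + aa))" unfolding F c4_def
      by (simp add: algebra_simps)
    also have "\<dots> \<le> c4 * M * \<epsilon> powr (-mm)"
      using eps_exp[OF e mm_ge(3)] M0 R0 unfolding c4_def by (intro mult_left_mono) auto
    finally show ?thesis by (simp add: algebra_simps)
  qed
  have D': "2 * (R + 1) * e' / h * N = \<epsilon> * N / 2" unfolding D by simp
  have hp': "N * h powr (\<alpha>/2) = \<epsilon> * N / 2" using hp by simp
  have "sup_norm H (F i j) \<le> (\<epsilon> * N / 2 + 4 * (R + 1) * M * (Y / h)) + \<epsilon> * N / 2"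
    using A unfolding C D' hp' .
  then show ?thesis using Fb by linarith
qed

end



definition "KRf R = 4 + 4 * sqrt R"
definition "LGf R = 4 * sqrt R + 2 * KRf R"
definition "aaf (\<alpha>::real) = 2 / \<alpha>"
definition "bbf (\<alpha>::real) = 1 / (1 - \<alpha>)"
definition "mmf \<alpha> = 2 * aaf \<alpha> + aaf \<alpha> * aaf \<alpha> + (aaf \<alpha> + 1) * \<alpha> * bbf \<alpha>"
definition "c1f R \<alpha> = 1 + 2 * (KRf R + 2) powr (\<alpha> * bbf \<alpha>)"
definition "c3f R \<alpha> = 6 * R * (6 * (R + 1)) powr aaf \<alpha> * (2 * (LGf R + 1)) powr (bbf \<alpha> * \<alpha> * (aaf \<alpha> + 1))"
definition "c4f R \<alpha> = 4 * (R + 1) * (4 * (R + 1)) powr aaf \<alpha> * 2 powr (aaf \<alpha> * aaf \<alpha>) * 2 powr aaf \<alpha>"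
definition "Cf R \<alpha> = 1 + c1f R \<alpha> + 2 + c3f R \<alpha> + c4f R \<alpha>"

context setting begin
lemma consts_eq: "mm = mmf \<alpha>" "c1 = c1f R \<alpha>" "c3 = c3f R \<alpha>" "c4 = c4f R \<alpha>"
  by (simp_all add: mm_def mmf_def aa_def aaf_def bb_def bbf_def c1_def c1f_def c3_def c3f_def
      c4_def c4f_def KR_def KRf_def LG_def LGf_def)
end

lemma Cf_ge:
  assumes "R > 0"
  shows "c1f R \<alpha> \<le> Cf R \<alpha>" "2 \<le> Cf R \<alpha>" "c3f R \<alpha> \<le> Cf R \<alpha>" "c4f R \<alpha> \<le> Cf R \<alpha>" "0 < Cf R \<alpha>"
proof -
  have "0 \<le> c1f R \<alpha>" unfolding c1f_def by simp
  moreover have "0 \<le> c3f R \<alpha>" unfolding c3f_def using assms by simp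
  moreover have "0 \<le> c4f R \<alpha>" unfolding c4f_def using assms by simp
  ultimately show "c1f R \<alpha> \<le> Cf R \<alpha>" "2 \<le> Cf R \<alpha>" "c3f R \<alpha> \<le> Cf R \<alpha>" "c4f R \<alpha> \<le> Cf R \<alpha>" "0 < Cf R \<alpha>"
    unfolding Cf_def by linarith+
qed

theorem lemma3p2:
  fixes d :: nat and \<alpha> :: real
  assumes "d \<ge> 2" and "0 < \<alpha>" and "\<alpha> < 1"
  shows "\<exists>m::real. m > 0 \<and> (\<forall>T::real. \<forall>R::real. T > 0 \<and> R > 0 \<longrightarrow>
    (\<exists>C::real. C > 0 \<and>
      (\<forall>u ut ux uxx x0 (\<epsilon>::real).
         in_C2a d \<alpha> T u ut ux uxx \<and>
         x0 \<in> Hbar d \<and> x0 d = 0 \<and>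
         (\<forall>P\<in>HTbar d T. u P \<noteq> 0 \<longrightarrow> snd P \<in> Bbar d x0 R) \<and>
         0 < \<epsilon> \<and> \<epsilon> < 1 \<longrightarrow>
         (let N = C2a_norm d \<alpha> T u ut ux uxx;
              B = C * \<epsilon> powr (- m) * sup_norm (HTbar d T) u
          in holder_norm d \<alpha> (HTbar d T) u \<le> \<epsilon> * N + B \<and>
             (\<forall>i\<in>{1..d}.
                sup_norm (HTbar d T) (ux i) \<le> \<epsilon> * N + B \<and>
                holder_norm d \<alpha> (HTbar d T) (\<lambda>P. snd P d * ux i P) \<le> \<epsilon> * N + B \<and>
                (\<forall>j\<in>{1..d}.
                   sup_norm (HTbar d T) (\<lambda>P. snd P d * uxx i j P) \<le> \<epsilon> * N + B))))))"
proof (intro exI conjI allI impI)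
  show "mmf \<alpha> > 0" unfolding mmf_def aaf_def bbf_def using assms
    by (intro add_pos_nonneg mult_nonneg_nonneg) auto
  fix T R :: real assume TR: "T > 0 \<and> R > 0"
  show "Cf R \<alpha> > 0" using Cf_ge(5) TR by simp
  fix u ut ux uxx x0 and \<epsilon> :: real
  assume h: "in_C2a d \<alpha> T u ut ux uxx \<and> x0 \<in> Hbar d \<and> x0 d = 0 \<and>
         (\<forall>P\<in>HTbar d T. u P \<noteq> 0 \<longrightarrow> snd P \<in> Bbar d x0 R) \<and> 0 < \<epsilon> \<and> \<epsilon> < 1"
  interpret S: setting d \<alpha> T R u ut ux uxx x0
    using assms TR h by unfold_locales auto
  have e: "0 < \<epsilon>" "\<epsilon> < 1" using h by auto
  let ?E = "\<epsilon> powr (- mmf \<alpha>)"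
  have EM: "0 \<le> ?E * S.M" using S.M0 by simp
  have up: "c * ?E * S.M \<le> Cf R \<alpha> * ?E * S.M" if "c \<le> Cf R \<alpha>" for c
    using mult_right_mono[OF that EM] by (simp add: mult.assoc)
  have NN: "C2a_norm d \<alpha> T u ut ux uxx = S.N" unfolding S.N_def ..
  have MM: "sup_norm (HTbar d T) u = S.M" unfolding S.M_def ..
  show "let N = C2a_norm d \<alpha> T u ut ux uxx;
              B = Cf R \<alpha> * \<epsilon> powr (- mmf \<alpha>) * sup_norm (HTbar d T) u
          in holder_norm d \<alpha> (HTbar d T) u \<le> \<epsilon> * N + B \<and>
             (\<forall>i\<in>{1..d}.
                sup_norm (HTbar d T) (ux i) \<le> \<epsilon> * N + B \<and>
                holder_norm d \<alpha> (HTbar d T) (\<lambda>P. snd P d * ux i P) \<le> \<epsilon> * N + B \<and>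
                (\<forall>j\<in>{1..d}.
                   sup_norm (HTbar d T) (\<lambda>P. snd P d * uxx i j P) \<le> \<epsilon> * N + B))"
    unfolding Let_def NN MM
  proof (intro conjI ballI)
    show "holder_norm d \<alpha> (HTbar d T) u \<le> \<epsilon> * S.N + Cf R \<alpha> * ?E * S.M"
      using S.R1[OF e] up[OF Cf_ge(1)] TR unfolding S.consts_eq by (smt (verit))
    fix i assume i: "i \<in> {1..d}"
    show "sup_norm (HTbar d T) (ux i) \<le> \<epsilon> * S.N + Cf R \<alpha> * ?E * S.M"
      using S.R2[OF e i] up[OF Cf_ge(2)] TR unfolding S.consts_eq by (smt (verit))
    show "holder_norm d \<alpha> (HTbar d T) (\<lambda>P. snd P d * ux i P) \<le> \<epsilon> * S.N + Cf R \<alpha> * ?E * S.M"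
      using S.R3[OF e i] up[OF Cf_ge(3)] TR unfolding S.consts_eq by (smt (verit))
    fix j assume j: "j \<in> {1..d}"
    show "sup_norm (HTbar d T) (\<lambda>P. snd P d * uxx i j P) \<le> \<epsilon> * S.N + Cf R \<alpha> * ?E * S.M"
      using S.R4[OF e i j] up[OF Cf_ge(4)] TR unfolding S.consts_eq by (smt (verit))
  qed
qed


end
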